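(* Let $A$ be a ${C^*}$-algebra and $a,b\in A_+$ with $b\ne0$. Suppose that for every continuous $f\colon[0,\|b\|]\to[0,1]$ with $f(0)=0$ and $f(\|b\|)\ne0$ we have $a\precsim f(b)$. Then there is a sequence $(z_n)$ in $A$ with $z_n^*bz_n\to a$ and $\|z_n\|=(\|a\|/\|b\|)^{1/2}$ for all $n$.
   Context: For positive $a,b$ in a ${C^*}$-algebra $A$, $a\precsim b$ (Cuntz subequivalence) means there is a sequence $(x_n)$ in $A$ with $x_n^*bx_n\to a$. *)

theory Defs
  imports "HOL-Analysis.Analysis" "HOL-Computational_Algebra.Polynomial"
begin

text \<open>(Possibly non-unital) C*-algebras: complex Banach *-algebras satisfying the
C*-identity.\<close>

class cstar_algebra = real_normed_algebra + banach +
  fixes scaleC :: "complex \<Rightarrow> 'a \<Rightarrow> 'a"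
    and adj :: "'a \<Rightarrow> 'a"
  assumes scaleC_add_right: "scaleC c (x + y) = scaleC c x + scaleC c y"
    and scaleC_add_left: "scaleC (c + d) x = scaleC c x + scaleC d x"
    and scaleC_scaleC: "scaleC c (scaleC d x) = scaleC (c * d) x"
    and scaleC_one: "scaleC 1 x = x"
    and scaleR_scaleC: "scaleR r x = scaleC (of_real r) x"
    and norm_scaleC: "norm (scaleC c x) = cmod c * norm x"
    and mult_scaleC_left: "scaleC c x * y = scaleC c (x * y)"
    and mult_scaleC_right: "x * scaleC c y = scaleC c (x * y)"
    and adj_adj: "adj (adj x) = x"
    and adj_add: "adj (x + y) = adj x + adj y"
    and adj_scaleC: "adj (scaleC c x) = scaleC (cnj c) (adj x)"
    and adj_mult: "adj (x * y) = adj y * adj x"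
    and cstar_identity: "norm (adj x * x) = norm x ^ 2"

text \<open>Quasi-invertibility (x is quasi-invertible iff 1 - x is invertible in the unitization).\<close>
definition quasi_invertible :: "'a::cstar_algebra \<Rightarrow> bool" where
  "quasi_invertible x \<longleftrightarrow> (\<exists>y. x + y - x * y = 0 \<and> x + y - y * x = 0)"

text \<open>Spectrum (taken in the unitization): 0 is always included; for \<lambda> \<noteq> 0,
\<lambda> \<in> \<sigma>(a) iff \<lambda> - a is not invertible iff a/\<lambda> is not quasi-invertible.\<close>
definition spectrum :: "'a::cstar_algebra \<Rightarrow> complex set" where
  "spectrum a = {0} \<union> {l. l \<noteq> 0 \<and> \<not> quasi_invertible (scaleC (1 / l) a)}"

definition positive :: "'a::cstar_algebra \<Rightarrow> bool" where
  "positive a \<longleftrightarrow> adj a = a \<and> spectrum a \<subseteq> complex_of_real ` {0..}"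

definition cuntz_below :: "'a::cstar_algebra \<Rightarrow> 'a \<Rightarrow> bool" where
  "cuntz_below a b \<longleftrightarrow> (\<exists>x :: nat \<Rightarrow> 'a. (\<lambda>n. adj (x n) * b * x n) \<longlonglongrightarrow> a)"

text \<open>cpow x n = x^(n+1) (no unit needed).\<close>
fun cpow :: "'a::cstar_algebra \<Rightarrow> nat \<Rightarrow> 'a" where
  "cpow x 0 = x"
| "cpow x (Suc n) = x * cpow x n"

text \<open>Evaluation of a real polynomial without constant term at an element.\<close>
definition peval :: "real poly \<Rightarrow> 'a::cstar_algebra \<Rightarrow> 'a" where
  "peval p x = (\<Sum>i<degree p. coeff p (Suc i) *\<^sub>R cpow x i)"

text \<open>Continuous functional calculus for a positive b and continuous f on [0,\<parallel>b\<parallel>]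
with f(0)=0: f(b) is the limit of p_n(b) for polynomials p_n with p_n(0)=0 converging
uniformly to f on [0,\<parallel>b\<parallel>] (which contains the spectrum of b).\<close>
definition fcalc :: "(real \<Rightarrow> real) \<Rightarrow> 'a::cstar_algebra \<Rightarrow> 'a" where
  "fcalc f b = (THE c. \<forall>p :: nat \<Rightarrow> real poly.
      (\<forall>n. poly (p n) 0 = 0) \<and> uniform_limit {0..norm b} (\<lambda>n x. poly (p n) x) f sequentially
      \<longrightarrow> (\<lambda>n. peval (p n) b) \<longlonglongrightarrow> c)"

end

theory Submission
  imports Defs "HOL-Computational_Algebra.Fundamental_Theorem_Algebra"
begin

lemma scaleC_zero_right[simp]: "scaleC c (0::'a::cstar_algebra) = 0"
proof -
  have "scaleC c (0::'a) = scaleC c 0 + scaleC c 0" by (metis add.right_neutral scaleC_add_right)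
  thus ?thesis by simp
qed

lemma scaleC_zero_left[simp]: "scaleC 0 (x::'a::cstar_algebra) = 0"
proof -
  have "scaleC 0 x = scaleC 0 x + scaleC 0 x" by (metis add.right_neutral scaleC_add_left)
  thus ?thesis by simp
qed

lemma scaleC_minus_right: "scaleC c (- x::'a::cstar_algebra) = - scaleC c x"
proof -
  have "scaleC c (-x) + scaleC c x = 0" by (simp add: scaleC_add_right[symmetric])
  thus ?thesis by (simp add: eq_neg_iff_add_eq_0)
qed

lemma scaleC_minus_left: "scaleC (- c) (x::'a::cstar_algebra) = - scaleC c x"
proof -
  have "scaleC (-c) x + scaleC c x = 0" by (simp add: scaleC_add_left[symmetric])
  thus ?thesis by (simp add: eq_neg_iff_add_eq_0)
qed

lemma scaleC_diff_right: "scaleC c (x - y::'a::cstar_algebra) = scaleC c x - scaleC c y"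
  by (simp only: diff_conv_add_uminus scaleC_add_right scaleC_minus_right)

lemma scaleC_diff_left: "scaleC (c - d) (x::'a::cstar_algebra) = scaleC c x - scaleC d x"
  by (simp only: diff_conv_add_uminus scaleC_add_left scaleC_minus_left)

lemma scaleC_sum_right: "scaleC c (sum f A) = (\<Sum>i\<in>A. scaleC c (f i::'a::cstar_algebra))"
  by (induction A rule: infinite_finite_induct) (auto simp: scaleC_add_right)

lemma scaleC_sum_left: "scaleC (sum f A) (x::'a::cstar_algebra) = (\<Sum>i\<in>A. scaleC (f i) x)"
  by (induction A rule: infinite_finite_induct) (auto simp: scaleC_add_left)

lemma scaleC_of_real: "scaleC (of_real r) (x::'a::cstar_algebra) = r *\<^sub>R x"
  by (simp add: scaleR_scaleC)

lemma adj_zero[simp]: "adj (0::'a::cstar_algebra) = 0"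
proof -
  have "adj (0::'a) = adj 0 + adj 0" by (simp add: adj_add[symmetric])
  thus ?thesis by simp
qed

lemma adj_minus: "adj (- x::'a::cstar_algebra) = - adj x"
proof -
  have "adj (-x) + adj x = 0" by (simp add: adj_add[symmetric])
  thus ?thesis by (simp add: eq_neg_iff_add_eq_0)
qed

lemma adj_diff: "adj (x - y::'a::cstar_algebra) = adj x - adj y"
  by (simp only: diff_conv_add_uminus adj_add adj_minus)

lemma adj_scaleR: "adj (r *\<^sub>R x::'a::cstar_algebra) = r *\<^sub>R adj x"
  by (simp add: scaleR_scaleC adj_scaleC)

lemma adj_sum: "adj (sum f A) = (\<Sum>i\<in>A. adj (f i::'a::cstar_algebra))"
  by (induction A rule: infinite_finite_induct) (auto simp: adj_add)

lemma norm_adj_le: "norm (x::'a::cstar_algebra) \<le> norm (adj x)"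
proof (cases "x = 0")
  case False
  have "norm x ^ 2 \<le> norm (adj x) * norm x"
    using norm_mult_ineq[of "adj x" x] by (simp add: cstar_identity)
  then show ?thesis using False by (simp add: power2_eq_square)
qed simp

lemma norm_adj[simp]: "norm (adj x::'a::cstar_algebra) = norm x"
  using norm_adj_le[of x] norm_adj_le[of "adj x"] by (simp add: adj_adj)

lemma cstar_sa: "adj x = x \<Longrightarrow> norm (x * x::'a::cstar_algebra) = norm x ^ 2"
  using cstar_identity[of x] by simp

lemma cpow_Suc_right: "cpow x (Suc n) = cpow x n * (x::'a::cstar_algebra)"
proof (induction n)
  case (Suc n)
  have "cpow x (Suc (Suc n)) = x * cpow x (Suc n)" by simp
  also have "\<dots> = x * (cpow x n * x)" using Suc by simp
  also have "\<dots> = cpow x (Suc n) * x" by (simp add: mult.assoc)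
  finally show ?case .
qed simp

lemma cpow_add: "cpow x (Suc (m + n)) = cpow x m * cpow (x::'a::cstar_algebra) n"
  by (induction m) (simp_all add: mult.assoc)

lemma adj_cpow: "adj x = x \<Longrightarrow> adj (cpow x n) = cpow (x::'a::cstar_algebra) n"
proof (induction n)
  case (Suc n)
  then show ?case using cpow_Suc_right[of x n] by (simp add: adj_mult)
qed simp

lemma norm_cpow_le: "norm (cpow x n) \<le> norm (x::'a::cstar_algebra) ^ Suc n"
proof (induction n)
  case (Suc n)
  have "norm (cpow x (Suc n)) \<le> norm x * norm (cpow x n)" by (simp add: norm_mult_ineq)
  also have "\<dots> \<le> norm x * norm x ^ Suc n" using Suc by (simp add: mult_left_mono)
  finally show ?case by simp
qed simp

lemma norm_cpow_sa: "adj x = x \<Longrightarrow> norm (cpow x (2^k - 1)) = norm (x::'a::cstar_algebra) ^ (2^k)"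
proof (induction k)
  case (Suc k)
  obtain m where m: "(2::nat)^k = Suc m" using gr0_implies_Suc[of "(2::nat)^k"] by auto
  have e: "(2::nat)^Suc k - 1 = Suc ((2^k - 1) + (2^k - 1))"
    by (simp add: m)
  have "norm (cpow x (2^Suc k - 1)) = norm (cpow x (2^k - 1) * cpow x (2^k - 1))"
    by (simp only: e cpow_add)
  also have "\<dots> = norm (cpow x (2^k - 1)) ^ 2" using Suc.prems by (simp add: cstar_sa adj_cpow)
  also have "\<dots> = (norm x ^ (2^k)) ^ 2" using Suc by simp
  also have "\<dots> = norm x ^ (2^k * 2)" by (simp only: power_mult)
  also have "(2::nat)^k * 2 = 2^Suc k" by simp
  finally show ?case .
qed simp


datatype 'a unz = Unz (usc: complex) (uvc: 'a)

instantiation unz :: (cstar_algebra) ring_1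
begin
definition "0 = Unz 0 0"
definition "1 = Unz 1 0"
definition "u + v = Unz (usc u + usc v) (uvc u + uvc v)"
definition "- u = Unz (- usc u) (- uvc u)"
definition "u - v = Unz (usc u - usc v) (uvc u - uvc v)"
definition "u * v = Unz (usc u * usc v) (scaleC (usc u) (uvc v) + scaleC (usc v) (uvc u) + uvc u * uvc v)"
instance
proof
  fix a b c :: "'a unz"
  show "a * b * c = a * (b * c)"
    by (simp add: times_unz_def scaleC_add_right scaleC_scaleC mult_scaleC_left mult_scaleC_right
        distrib_left distrib_right mult.assoc algebra_simps)
  show "1 * a = a" by (simp add: times_unz_def one_unz_def scaleC_one)
  show "a * 1 = a" by (simp add: times_unz_def one_unz_def scaleC_one)
  show "(a + b) * c = a * c + b * c"
    by (simp add: times_unz_def plus_unz_def scaleC_add_right scaleC_add_left distrib_right algebra_simps)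
  show "a * (b + c) = a * b + a * c"
    by (simp add: times_unz_def plus_unz_def scaleC_add_right scaleC_add_left distrib_left algebra_simps)
  show "a + b + c = a + (b + c)" by (simp add: plus_unz_def algebra_simps)
  show "a + b = b + a" by (simp add: plus_unz_def algebra_simps)
  show "0 + a = a" by (simp add: plus_unz_def zero_unz_def)
  show "- a + a = 0" by (simp add: plus_unz_def zero_unz_def uminus_unz_def)
  show "a - b = a + - b" by (simp add: plus_unz_def minus_unz_def uminus_unz_def)
  show "(0::'a unz) \<noteq> 1" by (simp add: zero_unz_def one_unz_def)
qed
end

lemma unz_eq_iff: "u = v \<longleftrightarrow> usc u = usc v \<and> uvc u = uvc v"
  by (cases u; cases v) auto

lemma unz_simps[simp]:
  "usc 0 = 0" "uvc 0 = 0" "usc 1 = 1" "uvc 1 = 0"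
  "usc (u + v) = usc u + usc v" "uvc (u + v) = uvc u + uvc v"
  "usc (- u) = - usc u" "uvc (- u) = - uvc u"
  "usc (u - v) = usc u - usc v" "uvc (u - v) = uvc u - uvc v"
  "usc (u * v) = usc u * usc v"
  "uvc (u * v) = scaleC (usc u) (uvc v) + scaleC (usc v) (uvc u) + uvc u * uvc v"
  by (simp_all add: zero_unz_def one_unz_def plus_unz_def uminus_unz_def minus_unz_def times_unz_def)

definition usm :: "complex \<Rightarrow> 'a::cstar_algebra unz \<Rightarrow> 'a unz" where
  "usm c u = Unz (c * usc u) (scaleC c (uvc u))"

lemma usm_simps[simp]: "usc (usm c u) = c * usc u" "uvc (usm c u) = scaleC c (uvc u)"
  by (simp_all add: usm_def)

lemma usm_mult_left: "usm c u * v = usm c (u * v)"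
  by (simp add: unz_eq_iff scaleC_add_right scaleC_scaleC mult_scaleC_left algebra_simps)

lemma usm_mult_right: "u * usm c v = usm c (u * v)"
  by (simp add: unz_eq_iff scaleC_add_right scaleC_scaleC mult_scaleC_right algebra_simps)

lemma usm_usm: "usm c (usm d u) = usm (c * d) u"
  by (simp add: unz_eq_iff scaleC_scaleC)

lemma usm_add: "usm c (u + v) = usm c u + usm c v"
  by (simp add: unz_eq_iff scaleC_add_right algebra_simps)

lemma usm_diff: "usm c (u - v) = usm c u - usm c v"
  by (simp add: unz_eq_iff scaleC_diff_right algebra_simps)

lemma usm_add_left: "usm (c + d) u = usm c u + usm d u"
  by (simp add: unz_eq_iff scaleC_add_left algebra_simps)

lemma usm_one[simp]: "usm 1 u = u"
  by (simp add: unz_eq_iff scaleC_one)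

lemma usm_zero[simp]: "usm 0 u = 0" "usm c 0 = 0"
  by (simp_all add: unz_eq_iff)

lemma usm_sum: "usm c (sum f A) = (\<Sum>i\<in>A. usm c (f i))"
  by (induction A rule: infinite_finite_induct) (auto simp: usm_add)

lemma usm_sum_left: "usm (sum f A) u = (\<Sum>i\<in>A. usm (f i) u)"
  by (induction A rule: infinite_finite_induct) (auto simp: usm_add_left)

lemma usm_power: "(usm c u) ^ n = usm (c ^ n) (u ^ n)"
  by (induction n) (simp_all add: usm_mult_left usm_mult_right usm_usm mult.commute)

lemma usm_commute: "usm c 1 * u = u * usm c 1"
  by (simp add: usm_mult_left usm_mult_right)

definition uel :: "'a::cstar_algebra \<Rightarrow> 'a unz" where "uel x = Unz 0 x"

lemma uel_simps[simp]: "usc (uel x) = 0" "uvc (uel x) = x"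
  by (simp_all add: uel_def)

lemma uel_mult: "uel x * uel y = uel (x * y)"
  by (simp add: unz_eq_iff)

lemma uel_add: "uel (x + y) = uel x + uel y"
  by (simp add: unz_eq_iff)

lemma uel_diff: "uel (x - y) = uel x - uel y"
  by (simp add: unz_eq_iff)

lemma uel_zero[simp]: "uel 0 = 0" by (simp add: unz_eq_iff)

lemma uel_scaleC: "uel (scaleC c x) = usm c (uel x)"
  by (simp add: unz_eq_iff)

lemma uel_power: "uel x ^ Suc n = uel (cpow x n)"
  by (induction n) (simp_all add: uel_mult[symmetric])

lemma unz_decomp: "u = usm (usc u) 1 + uel (uvc u)"
  by (simp add: unz_eq_iff)

definition unorm :: "'a::cstar_algebra unz \<Rightarrow> real" where
  "unorm u = cmod (usc u) + norm (uvc u)"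

lemma unorm_ge0: "unorm u \<ge> 0" by (simp add: unorm_def)

lemma unorm_add: "unorm (u + v) \<le> unorm u + unorm v"
  unfolding unorm_def using norm_triangle_ineq[of "usc u" "usc v"] norm_triangle_ineq[of "uvc u" "uvc v"]
  by simp

lemma unorm_minus: "unorm (- u) = unorm u" by (simp add: unorm_def)

lemma unorm_diff: "unorm (u - v) \<le> unorm u + unorm v"
  using unorm_add[of u "- v"] by (simp add: unorm_minus)

lemma unorm_usm: "unorm (usm c u) = cmod c * unorm u"
  by (simp add: unorm_def norm_scaleC norm_mult algebra_simps)

lemma unorm_mult: "unorm (u * v) \<le> unorm u * unorm v"
proof -
  have "norm (uvc (u * v)) \<le> cmod (usc u) * norm (uvc v) + cmod (usc v) * norm (uvc u) + norm (uvc u) * norm (uvc v)"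
    by (simp, intro order_trans[OF norm_triangle_ineq] add_mono order_trans[OF norm_triangle_ineq] norm_mult_ineq)
       (simp_all add: norm_scaleC)
  thus ?thesis by (simp add: unorm_def norm_mult algebra_simps)
qed

lemma unorm_uel[simp]: "unorm (uel x) = norm x" by (simp add: unorm_def)
lemma unorm_one[simp]: "unorm 1 = 1" by (simp add: unorm_def)
lemma unorm_zero[simp]: "unorm 0 = 0" by (simp add: unorm_def)

lemma unorm_sum: "unorm (sum f A) \<le> (\<Sum>i\<in>A. unorm (f i))"
  by (induction A rule: infinite_finite_induct) (auto intro: order_trans[OF unorm_add])

definition uinv :: "'a::cstar_algebra unz \<Rightarrow> 'a unz \<Rightarrow> bool" where
  "uinv u v \<longleftrightarrow> u * v = 1 \<and> v * u = 1"

definition uinvertible :: "'a::cstar_algebra unz \<Rightarrow> bool" where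
  "uinvertible u \<longleftrightarrow> (\<exists>v. uinv u v)"

lemma uinv_mult: "uinv u v \<Longrightarrow> uinv u' v' \<Longrightarrow> uinv (u * u') (v' * v)"
  unfolding uinv_def by (metis mult.assoc mult_1_left)

lemma uinvertible_mult: "uinvertible u \<Longrightarrow> uinvertible u' \<Longrightarrow> uinvertible (u * u')"
  unfolding uinvertible_def using uinv_mult by blast

lemma uinv_unique: "uinv u v \<Longrightarrow> uinv u v' \<Longrightarrow> v = v'"
  unfolding uinv_def by (metis mult.assoc mult_1_left mult_1_right)

lemma uinv_commute: "uinv u v \<Longrightarrow> u * w = w * u \<Longrightarrow> v * w = w * v"
proof -
  assume "uinv u v" "u * w = w * u"
  hence "v * w = v * (w * u) * v" by (metis uinv_def mult.assoc mult_1_right)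
  also have "\<dots> = v * (u * w) * v" using \<open>u * w = w * u\<close> by simp
  also have "\<dots> = w * v" using \<open>uinv u v\<close> by (metis uinv_def mult.assoc mult_1_left)
  finally show ?thesis .
qed

lemma uinv_usm: "c \<noteq> 0 \<Longrightarrow> uinv u v \<Longrightarrow> uinv (usm c u) (usm (1/c) v)"
  unfolding uinv_def by (simp add: usm_mult_left usm_mult_right usm_usm)

lemma uinvertible_usm: "c \<noteq> 0 \<Longrightarrow> uinvertible (usm c u) \<longleftrightarrow> uinvertible u"
proof
  assume "c \<noteq> 0" "uinvertible (usm c u)"
  then obtain v where "uinv (usm c u) v" by (auto simp: uinvertible_def)
  from uinv_usm[OF _ this, of "1/c"] \<open>c \<noteq> 0\<close> show "uinvertible u"
    by (auto simp: uinvertible_def usm_usm)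
qed (auto simp: uinvertible_def intro: uinv_usm)

lemma quasi_inv_iff: "quasi_invertible x \<longleftrightarrow> uinvertible (1 - uel x)"
proof
  assume "quasi_invertible x"
  then obtain y where y: "x + y - x * y = 0" "x + y - y * x = 0" unfolding quasi_invertible_def by blast
  have "uinv (1 - uel x) (1 - uel y)"
    unfolding uinv_def using y by (simp add: unz_eq_iff scaleC_one algebra_simps)
  thus "uinvertible (1 - uel x)" by (auto simp: uinvertible_def)
next
  assume "uinvertible (1 - uel x)"
  then obtain v where v: "(1 - uel x) * v = 1" "v * (1 - uel x) = 1" by (auto simp: uinvertible_def uinv_def)
  have sc: "usc v = 1" using arg_cong[OF v(1), of usc] by simp
  have "x + (- uvc v) - x * (- uvc v) = 0" "x + (- uvc v) - (- uvc v) * x = 0"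
    using arg_cong[OF v(1), of uvc] arg_cong[OF v(2), of uvc] sc
    by (simp_all add: scaleC_one scaleC_minus_right algebra_simps)
  thus "quasi_invertible x" unfolding quasi_invertible_def by blast
qed


lemma neumann:
  fixes x :: "'a::cstar_algebra"
  assumes "norm x < 1"
  shows "\<exists>y. x + y - x * y = 0 \<and> x + y - y * x = 0 \<and> norm y \<le> norm x / (1 - norm x)"
proof -
  have sg: "summable (\<lambda>n. norm x ^ Suc n)"
    using summable_geometric[of "norm x"] assms summable_mult[of "\<lambda>n. norm x ^ n" "norm x"]
    by simp
  have sn: "summable (\<lambda>n. norm (cpow x n))"
    by (rule summable_comparison_test[OF _ sg]) (use norm_cpow_le[of x] in auto)
  hence s: "summable (\<lambda>n. cpow x n)" by (rule summable_norm_cancel)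
  define t where "t = (\<Sum>n. cpow x n)"
  have s1: "(\<Sum>n. cpow x (Suc n)) = t - x"
    using suminf_split_head[OF s] by (simp add: t_def)
  have "x * t = (\<Sum>n. x * cpow x n)" using suminf_mult[OF s, of x] by (simp add: t_def)
  also have "\<dots> = t - x" using s1 by simp
  finally have xt: "x * t = t - x" .
  have "t * x = (\<Sum>n. cpow x n * x)" using suminf_mult2[OF s, of x] by (simp add: t_def)
  also have "\<dots> = t - x" using s1 by (simp add: cpow_Suc_right[symmetric])
  finally have tx: "t * x = t - x" .
  have "norm t \<le> (\<Sum>n. norm (cpow x n))" unfolding t_def by (rule summable_norm[OF sn])
  also have "\<dots> \<le> (\<Sum>n. norm x ^ Suc n)"
    by (rule suminf_le[OF _ sn sg]) (rule norm_cpow_le)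
  also have "\<dots> = norm x / (1 - norm x)"
    using suminf_mult[OF summable_geometric[of "norm x"], of "norm x"] suminf_geometric[of "norm x"] assms
    by simp
  finally have nt: "norm t \<le> norm x / (1 - norm x)" .
  show ?thesis
    by (rule exI[of _ "- t"]) (simp add: xt tx nt)
qed

lemma neumann_unz:
  fixes x :: "'a::cstar_algebra"
  assumes "norm x < 1"
  shows "\<exists>v. uinv (1 - uel x) v \<and> unorm (v - 1) \<le> norm x / (1 - norm x)"
proof -
  obtain y where y: "x + y - x * y = 0" "x + y - y * x = 0" "norm y \<le> norm x / (1 - norm x)"
    using neumann[OF assms] by blast
  have "uinv (1 - uel x) (1 - uel y)"
    unfolding uinv_def using y by (simp add: unz_eq_iff scaleC_one algebra_simps)
  moreover have "unorm ((1 - uel y) - 1) = norm y" by (simp add: unorm_def)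
  ultimately show ?thesis using y(3) by auto
qed

lemma neumann_half:
  fixes x :: "'a::cstar_algebra"
  assumes "norm x \<le> 1/2"
  shows "\<exists>v. uinv (1 - uel x) v \<and> unorm v \<le> 2"
proof -
  obtain v where v: "uinv (1 - uel x) v" "unorm (v - 1) \<le> norm x / (1 - norm x)"
    using neumann_unz[of x] assms by auto
  have "norm x / (1 - norm x) \<le> 1" using assms by (simp add: field_simps)
  hence "unorm (v - 1) \<le> 1" using v by simp
  hence "unorm v \<le> 2" using unorm_add[of "v - 1" 1] by simp
  thus ?thesis using v by auto
qed

lemma spectrum_iff:
  fixes a :: "'a::cstar_algebra"
  assumes "l \<noteq> 0"
  shows "l \<notin> spectrum a \<longleftrightarrow> uinvertible (usm l 1 - uel a)"
proof -
  have e: "usm l 1 - uel a = usm l (1 - uel (scaleC (1/l) a))"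
    using assms by (simp add: unz_eq_iff scaleC_diff_right scaleC_scaleC scaleC_minus_right scaleC_one)
  show ?thesis
    using assms by (simp add: spectrum_def e uinvertible_usm quasi_inv_iff)
qed

lemma spectrum_bound:
  fixes a :: "'a::cstar_algebra"
  assumes "l \<in> spectrum a"
  shows "cmod l \<le> norm a"
proof (rule ccontr)
  assume "\<not> cmod l \<le> norm a"
  hence l: "l \<noteq> 0" "norm a < cmod l" by auto
  have "norm (scaleC (1/l) a) < 1"
    using l by (simp add: norm_scaleC norm_divide field_simps)
  hence "quasi_invertible (scaleC (1/l) a)"
    using neumann[of "scaleC (1/l) a"] unfolding quasi_invertible_def by blast
  thus False using assms l by (simp add: spectrum_def)
qed


lemma of_nat_unz: "(of_nat n :: 'a::cstar_algebra unz) = usm (of_nat n) 1"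
  by (induction n) (simp_all add: unz_eq_iff algebra_simps)

lemma usm_cancel: "c \<noteq> 0 \<Longrightarrow> usm c u = 0 \<Longrightarrow> u = (0::'a::cstar_algebra unz)"
  using usm_usm[of "1/c" c u] by simp

lemma sum_usm_const: "(\<Sum>k\<in>A. usm (f k) u) = usm (\<Sum>k\<in>A. f k) (u::'a::cstar_algebra unz)"
  by (simp add: usm_sum_left)

lemma geo_ring: "(1 - w) * (\<Sum>i<n. w ^ i) = 1 - (w::'b::ring_1) ^ n"
proof (induction n)
  case (Suc n)
  have "(1 - w) * (\<Sum>i<Suc n. w ^ i) = (1 - w) * (\<Sum>i<n. w ^ i) + (1 - w) * w ^ n"
    by (simp add: distrib_left)
  also have "\<dots> = (1 - w ^ n) + (w ^ n - w * w ^ n)" using Suc by (simp add: left_diff_distrib)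
  finally show ?case by simp
qed simp

lemma pow_swap: "((x::'b::monoid_mult) ^ k) ^ m = (x ^ m) ^ k"
  by (simp add: power_mult[symmetric] mult.commute)

context
  fixes F :: "complex \<Rightarrow> 'a::cstar_algebra unz" and z :: "'a unz" and R K L :: real
  assumes R: "R > 0"
    and inv1: "\<And>\<mu>. cmod \<mu> \<le> R \<Longrightarrow> F \<mu> * (1 - usm \<mu> z) = 1"
    and inv2: "\<And>\<mu>. cmod \<mu> \<le> R \<Longrightarrow> (1 - usm \<mu> z) * F \<mu> = 1"
    and comm2: "\<And>\<mu>. cmod \<mu> \<le> R \<Longrightarrow> F \<mu> * z = z * F \<mu>"
    and bd: "\<And>\<mu>. cmod \<mu> \<le> R \<Longrightarrow> unorm (F \<mu>) \<le> K"
    and L: "unorm z \<le> L"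
begin

lemma K_nonneg: "K \<ge> 0"
  using bd[of 0] R unorm_ge0[of "F 0"] by simp

lemma L_nonneg: "L \<ge> 0"
  using L unorm_ge0[of z] by simp

lemma resolvent:
  assumes "cmod \<mu> \<le> R" "cmod \<nu> \<le> R"
  shows "F \<nu> - F \<mu> = usm (\<nu> - \<mu>) (z * F \<nu> * F \<mu>)"
proof -
  have "F \<nu> - F \<mu> = F \<nu> * ((1 - usm \<mu> z) * F \<mu>) - (F \<nu> * (1 - usm \<nu> z)) * F \<mu>"
    using inv1[OF assms(2)] inv2[OF assms(1)] by simp
  also have "\<dots> = F \<nu> * (usm \<nu> z - usm \<mu> z) * F \<mu>"
    by (simp add: algebra_simps)
  also have "usm \<nu> z - usm \<mu> z = usm (\<nu> - \<mu>) z"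
    by (simp add: unz_eq_iff scaleC_diff_left algebra_simps)
  also have "F \<nu> * usm (\<nu> - \<mu>) z * F \<mu> = usm (\<nu> - \<mu>) (F \<nu> * z * F \<mu>)"
    by (simp add: usm_mult_left usm_mult_right)
  also have "F \<nu> * z * F \<mu> = z * F \<nu> * F \<mu>"
    using comm2[OF assms(2)] by simp
  finally show ?thesis .
qed

lemma lipschitz:
  assumes "cmod \<mu> \<le> R" "cmod \<nu> \<le> R"
  shows "unorm (F \<nu> - F \<mu>) \<le> cmod (\<nu> - \<mu>) * (L * K^2)"
proof -
  have "unorm (z * F \<nu> * F \<mu>) \<le> unorm z * unorm (F \<nu>) * unorm (F \<mu>)"
    by (meson order_trans unorm_mult mult_right_mono unorm_ge0)
  also have "\<dots> \<le> L * K * K"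
    using L bd[OF assms(1)] bd[OF assms(2)] K_nonneg L_nonneg unorm_ge0
    by (intro mult_mono) auto
  finally show ?thesis
    using resolvent[OF assms] by (simp add: unorm_usm power2_eq_square mult.assoc mult_left_mono)
qed

lemma mult3_bound:
  assumes "unorm a \<le> A" "unorm b \<le> B" "unorm c \<le> C"
  shows "unorm (a * b * c) \<le> A * B * C"
proof -
  have "unorm (a * b * c) \<le> unorm a * unorm b * unorm c"
    by (meson order_trans unorm_mult mult_right_mono unorm_ge0)
  also have "\<dots> \<le> A * B * C"
  proof -
    have "0 \<le> A" "0 \<le> B" "0 \<le> C" using assms unorm_ge0 order_trans by blast+
    thus ?thesis using assms unorm_ge0 by (intro mult_mono) auto
  qed
  finally show ?thesis .
qed

context
  fixes \<omega> :: complex and N :: nat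
  assumes N: "N \<ge> 2" and om1: "cmod \<omega> = 1" and omN: "\<omega> ^ N = 1"
    and omsum: "(\<Sum>k<N. \<omega> ^ k) = 0"
begin

definition Sfun :: "real \<Rightarrow> 'a unz" where
  "Sfun \<rho> = usm (1 / of_nat N) (\<Sum>k<N. F (of_real \<rho> * \<omega> ^ k))"

definition Tfun :: "real \<Rightarrow> 'a unz" where
  "Tfun \<rho> = (\<Sum>k<N. usm (\<omega> ^ k) (z * F (of_real \<rho> * \<omega> ^ k) * F (of_real \<rho> * \<omega> ^ k)))"

lemma cmod_pt: "cmod (of_real \<rho> * \<omega> ^ k) = \<bar>\<rho>\<bar>"
  by (simp add: norm_mult norm_power om1)

lemma T_bound:
  assumes "0 \<le> \<rho>" "\<rho> \<le> R"
  shows "unorm (Tfun \<rho>) \<le> N * (\<rho> * cmod (\<omega> - 1) * (L^2 * K^3))"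
proof (cases "\<rho> = 0")
  case True
  have "Tfun \<rho> = usm (\<Sum>k<N. \<omega> ^ k) (z * F 0 * F 0)"
    by (simp add: Tfun_def True sum_usm_const)
  also have "\<dots> = 0" by (simp add: omsum)
  finally show ?thesis using assms K_nonneg L_nonneg by simp
next
  case False
  hence rp: "\<rho> > 0" using assms by simp
  have inR: "cmod (of_real \<rho> * \<omega> ^ k) \<le> R" for k using cmod_pt assms by simp
  define G where "G k = F (of_real \<rho> * \<omega> ^ k)" for k
  have om_ne: "\<omega> \<noteq> 1"
  proof
    assume "\<omega> = 1"
    hence "(\<Sum>k<N. \<omega> ^ k) = of_nat N" by simp
    thus False using omsum N by simp
  qed
  have step: "G (Suc k) - G k = usm (of_real \<rho> * (\<omega> - 1)) (usm (\<omega> ^ k) (z * G (Suc k) * G k))" for k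
  proof -
    have "G (Suc k) - G k = usm (of_real \<rho> * \<omega> ^ Suc k - of_real \<rho> * \<omega> ^ k) (z * G (Suc k) * G k)"
      unfolding G_def by (rule resolvent[OF inR inR])
    also have "of_real \<rho> * \<omega> ^ Suc k - of_real \<rho> * \<omega> ^ k = of_real \<rho> * (\<omega> - 1) * \<omega> ^ k"
      by (simp add: algebra_simps)
    finally show ?thesis by (simp add: usm_usm)
  qed
  have "(\<Sum>k<N. G (Suc k) - G k) = G N - G 0" by (rule sum_lessThan_telescope)
  also have "G N = G 0" by (simp add: G_def omN)
  finally have "(\<Sum>k<N. G (Suc k) - G k) = 0" by simp
  hence "usm (of_real \<rho> * (\<omega> - 1)) (\<Sum>k<N. usm (\<omega> ^ k) (z * G (Suc k) * G k)) = 0"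
    by (simp add: step usm_sum)
  hence z0: "(\<Sum>k<N. usm (\<omega> ^ k) (z * G (Suc k) * G k)) = 0"
    by (rule usm_cancel[rotated]) (use rp om_ne in simp)
  have "Tfun \<rho> = Tfun \<rho> - (\<Sum>k<N. usm (\<omega> ^ k) (z * G (Suc k) * G k))" by (simp add: z0)
  also have "\<dots> = (\<Sum>k<N. usm (\<omega> ^ k) (z * (G k - G (Suc k)) * G k))"
    unfolding Tfun_def G_def[symmetric] by (simp add: sum_subtractf[symmetric] usm_diff[symmetric] algebra_simps)
  finally have Te: "Tfun \<rho> = (\<Sum>k<N. usm (\<omega> ^ k) (z * (G k - G (Suc k)) * G k))" .
  have tb: "unorm (usm (\<omega> ^ k) (z * (G k - G (Suc k)) * G k)) \<le> \<rho> * cmod (\<omega> - 1) * (L^2 * K^3)" for k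
  proof -
    have "unorm (G k - G (Suc k)) \<le> cmod (of_real \<rho> * \<omega> ^ k - of_real \<rho> * \<omega> ^ Suc k) * (L * K^2)"
      unfolding G_def by (rule lipschitz[OF inR inR])
    also have "cmod (of_real \<rho> * \<omega> ^ k - of_real \<rho> * \<omega> ^ Suc k) = \<rho> * cmod (\<omega> - 1)"
    proof -
      have "of_real \<rho> * \<omega> ^ k - of_real \<rho> * \<omega> ^ Suc k = - (of_real \<rho> * \<omega> ^ k * (\<omega> - 1))"
        by (simp add: algebra_simps)
      thus ?thesis using rp by (simp only: norm_minus_cancel norm_mult norm_power om1) simp
    qed
    finally have d: "unorm (G k - G (Suc k)) \<le> \<rho> * cmod (\<omega> - 1) * (L * K ^ 2)" .
    have "unorm (z * (G k - G (Suc k)) * G k) \<le> L * (\<rho> * cmod (\<omega> - 1) * (L * K ^ 2)) * K"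
      by (rule mult3_bound[OF L d]) (simp add: G_def bd[OF inR])
    thus ?thesis by (simp add: unorm_usm norm_power om1 power2_eq_square power3_eq_cube algebra_simps)
  qed
  have "unorm (Tfun \<rho>) \<le> (\<Sum>k<N. unorm (usm (\<omega> ^ k) (z * (G k - G (Suc k)) * G k)))"
    unfolding Te by (rule unorm_sum)
  also have "\<dots> \<le> (\<Sum>k<N. \<rho> * cmod (\<omega> - 1) * (L^2 * K^3))"
    by (rule sum_mono) (rule tb)
  finally show ?thesis by simp
qed


lemma S_step:
  assumes "0 \<le> \<rho>" "\<rho> \<le> \<rho>'" "\<rho>' \<le> R"
  shows "unorm (Sfun \<rho>' - Sfun \<rho>) \<le> (\<rho>' - \<rho>) * (\<rho> * cmod (\<omega> - 1) + (\<rho>' - \<rho>)) * (L^2 * K^3)"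
proof -
  have inR: "cmod (of_real \<rho> * \<omega> ^ k) \<le> R" "cmod (of_real \<rho>' * \<omega> ^ k) \<le> R" for k
    using cmod_pt assms by simp_all
  define G where "G k = F (of_real \<rho> * \<omega> ^ k)" for k
  define H where "H k = F (of_real \<rho>' * \<omega> ^ k)" for k
  have d: "H k - G k = usm (of_real (\<rho>' - \<rho>)) (usm (\<omega> ^ k) (z * H k * G k))" for k
  proof -
    have "H k - G k = usm (of_real \<rho>' * \<omega> ^ k - of_real \<rho> * \<omega> ^ k) (z * H k * G k)"
      unfolding G_def H_def by (rule resolvent[OF inR(1) inR(2)])
    also have "of_real \<rho>' * \<omega> ^ k - of_real \<rho> * \<omega> ^ k = of_real (\<rho>' - \<rho>) * \<omega> ^ k"
      by (simp add: algebra_simps)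
    finally show ?thesis by (simp add: usm_usm)
  qed
  have "Sfun \<rho>' - Sfun \<rho> = usm (1 / of_nat N) (\<Sum>k<N. H k - G k)"
    unfolding Sfun_def G_def H_def by (simp add: usm_diff[symmetric] sum_subtractf)
  also have "\<dots> = usm (1 / of_nat N) (usm (of_real (\<rho>' - \<rho>)) (\<Sum>k<N. usm (\<omega> ^ k) (z * H k * G k)))"
    by (simp only: d usm_sum[symmetric])
  also have "\<dots> = usm (of_real (\<rho>' - \<rho>) / of_nat N) (\<Sum>k<N. usm (\<omega> ^ k) (z * H k * G k))"
    by (simp add: usm_usm)
  also have "(\<Sum>k<N. usm (\<omega> ^ k) (z * H k * G k)) = Tfun \<rho> + (\<Sum>k<N. usm (\<omega> ^ k) (z * (H k - G k) * G k))"
    unfolding Tfun_def G_def[symmetric] by (simp add: sum.distrib[symmetric] usm_add[symmetric] algebra_simps)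
  finally have e: "Sfun \<rho>' - Sfun \<rho> = usm (of_real (\<rho>' - \<rho>) / of_nat N) (Tfun \<rho> + (\<Sum>k<N. usm (\<omega> ^ k) (z * (H k - G k) * G k)))" .
  have hb: "unorm (usm (\<omega> ^ k) (z * (H k - G k) * G k)) \<le> (\<rho>' - \<rho>) * (L^2 * K^3)" for k
  proof -
    have "unorm (H k - G k) \<le> cmod (of_real \<rho>' * \<omega> ^ k - of_real \<rho> * \<omega> ^ k) * (L * K^2)"
      unfolding G_def H_def by (rule lipschitz[OF inR(1) inR(2)])
    also have "cmod (of_real \<rho>' * \<omega> ^ k - of_real \<rho> * \<omega> ^ k) = \<rho>' - \<rho>"
    proof -
      have "of_real \<rho>' * \<omega> ^ k - of_real \<rho> * \<omega> ^ k = of_real (\<rho>' - \<rho>) * \<omega> ^ k"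
        by (simp add: algebra_simps)
      thus ?thesis using assms by (simp add: norm_mult norm_power om1 of_real_diff[symmetric] del: of_real_diff)
    qed
    finally have dd: "unorm (H k - G k) \<le> (\<rho>' - \<rho>) * (L * K ^ 2)" .
    have "unorm (z * (H k - G k) * G k) \<le> L * ((\<rho>' - \<rho>) * (L * K ^ 2)) * K"
      by (rule mult3_bound[OF L dd]) (simp add: G_def bd[OF inR(1)])
    thus ?thesis by (simp add: unorm_usm norm_power om1 power2_eq_square power3_eq_cube algebra_simps)
  qed
  have s2: "unorm (\<Sum>k<N. usm (\<omega> ^ k) (z * (H k - G k) * G k)) \<le> N * ((\<rho>' - \<rho>) * (L^2 * K^3))"
  proof -
    have "unorm (\<Sum>k<N. usm (\<omega> ^ k) (z * (H k - G k) * G k)) \<le> (\<Sum>k<N. unorm (usm (\<omega> ^ k) (z * (H k - G k) * G k)))"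
      by (rule unorm_sum)
    also have "\<dots> \<le> (\<Sum>k<N. (\<rho>' - \<rho>) * (L^2 * K^3))" by (rule sum_mono) (rule hb)
    finally show ?thesis by simp
  qed
  have "unorm (Sfun \<rho>' - Sfun \<rho>) \<le> ((\<rho>' - \<rho>) / N) * (N * (\<rho> * cmod (\<omega> - 1) * (L^2 * K^3)) + N * ((\<rho>' - \<rho>) * (L^2 * K^3)))"
  proof -
    have c: "cmod (of_real (\<rho>' - \<rho>) / of_nat N) = (\<rho>' - \<rho>) / N"
      using assms by (simp add: norm_divide del: of_real_diff)
    have "unorm (Sfun \<rho>' - Sfun \<rho>) = ((\<rho>' - \<rho>) / N) * unorm (Tfun \<rho> + (\<Sum>k<N. usm (\<omega> ^ k) (z * (H k - G k) * G k)))"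
      unfolding e unorm_usm c ..
    also have "\<dots> \<le> ((\<rho>' - \<rho>) / N) * (N * (\<rho> * cmod (\<omega> - 1) * (L^2 * K^3)) + N * ((\<rho>' - \<rho>) * (L^2 * K^3)))"
      using assms by (intro mult_left_mono order_trans[OF unorm_add] add_mono T_bound s2) auto
    finally show ?thesis .
  qed
  also have "\<dots> = (\<rho>' - \<rho>) * (\<rho> * cmod (\<omega> - 1) + (\<rho>' - \<rho>)) * (L^2 * K^3)"
    using N by (simp add: field_simps)
  finally show ?thesis .
qed

lemma S_zero: "Sfun 0 = 1"
proof -
  have F0: "F 0 = 1" using inv1[of 0] R by simp
  show ?thesis using N by (simp add: Sfun_def F0 of_nat_unz usm_usm)
qed

lemma S_chain:
  assumes om_bd: "cmod (\<omega> - 1) \<le> 2 * pi / N"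
  shows "unorm (Sfun R - 1) \<le> (2 * pi + 1) * R^2 * (L^2 * K^3) / N"
proof -
  define r where "r j = R * real j / real N" for j
  have r0: "r 0 = 0" and rN: "r N = R" using N by (simp_all add: r_def)
  have rs: "r (Suc j) - r j = R / N" for j unfolding r_def by (simp add: diff_divide_distrib[symmetric] algebra_simps)
  have "(\<Sum>j<N. Sfun (r (Suc j)) - Sfun (r j)) = Sfun (r N) - Sfun (r 0)"
    by (rule sum_lessThan_telescope)
  hence "Sfun R - 1 = (\<Sum>j<N. Sfun (r (Suc j)) - Sfun (r j))"
    by (simp add: rN r0 S_zero)
  hence "unorm (Sfun R - 1) \<le> (\<Sum>j<N. unorm (Sfun (r (Suc j)) - Sfun (r j)))"
    using unorm_sum by metis
  also have "\<dots> \<le> (\<Sum>j<N. (R / N) * (R * (2 * pi / N) + R / N) * (L^2 * K^3))"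
  proof (rule sum_mono)
    fix j assume j: "j \<in> {..<N}"
    have jN: "R * real (Suc j) \<le> R * real N" using j R by (intro mult_left_mono) auto
    have rj: "0 \<le> r j" "r j \<le> r (Suc j)" "r (Suc j) \<le> R" "r j \<le> R"
      using j R N jN by (auto simp: r_def divide_right_mono pos_divide_le_eq)
    have LK: "0 \<le> L^2 * K^3" using K_nonneg by simp
    have "unorm (Sfun (r (Suc j)) - Sfun (r j)) \<le> (r (Suc j) - r j) * (r j * cmod (\<omega> - 1) + (r (Suc j) - r j)) * (L^2 * K^3)"
      by (rule S_step) (use rj in auto)
    also have "\<dots> \<le> (R / N) * (R * (2 * pi / N) + R / N) * (L^2 * K^3)"
      unfolding rs using rj R om_bd LK
      by (intro mult_right_mono mult_left_mono add_mono mult_mono) auto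
    finally show "unorm (Sfun (r (Suc j)) - Sfun (r j)) \<le> (R / N) * (R * (2 * pi / N) + R / N) * (L^2 * K^3)" .
  qed
  also have "\<dots> = (2 * pi + 1) * R^2 * (L^2 * K^3) / N"
    using N by (simp add: field_simps power2_eq_square)
  finally show ?thesis .
qed


lemma S_inverse:
  assumes omm: "\<And>m. 0 < m \<Longrightarrow> m < N \<Longrightarrow> \<omega> ^ m \<noteq> 1"
  shows "Sfun R * (1 - (usm (of_real R) z) ^ N) = 1"
proof -
  define y where "y = usm (of_real R) z"
  have inR: "cmod (of_real R * \<omega> ^ k) \<le> R" for k using cmod_pt R by simp
  have fk: "F (of_real R * \<omega> ^ k) * (1 - y ^ N) = (\<Sum>m<N. usm ((\<omega> ^ k) ^ m) (y ^ m))" for k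
  proof -
    define w where "w = usm (\<omega> ^ k) y"
    have wN: "w ^ N = y ^ N"
      by (simp add: w_def usm_power pow_swap[of \<omega> k N] omN)
    have "F (of_real R * \<omega> ^ k) * (1 - w) = 1"
      using inv1[OF inR[of k]] by (simp add: w_def y_def usm_usm mult.commute)
    hence "F (of_real R * \<omega> ^ k) * (1 - y ^ N) = F (of_real R * \<omega> ^ k) * ((1 - w) * (\<Sum>m<N. w ^ m))"
      by (simp add: geo_ring wN)
    also have "\<dots> = (\<Sum>m<N. w ^ m)"
      by (simp add: mult.assoc[symmetric] \<open>F (of_real R * \<omega> ^ k) * (1 - w) = 1\<close>)
    also have "\<dots> = (\<Sum>m<N. usm ((\<omega> ^ k) ^ m) (y ^ m))"
      by (simp add: w_def usm_power)
    finally show ?thesis .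
  qed
  have cs: "(\<Sum>k<N. (\<omega> ^ k) ^ m) = (if m = 0 then of_nat N else 0)" if "m < N" for m
  proof (cases "m = 0")
    case False
    have ne: "\<omega> ^ m \<noteq> 1" using omm False that by simp
    have "(\<Sum>k<N. (\<omega> ^ k) ^ m) = (\<Sum>k<N. (\<omega> ^ m) ^ k)"
      by (simp add: pow_swap[of \<omega> _ m])
    also have "\<dots> = ((\<omega> ^ m) ^ N - 1) / (\<omega> ^ m - 1)" by (rule geometric_sum[OF ne])
    also have "(\<omega> ^ m) ^ N = 1" by (simp add: pow_swap[of \<omega> m N] omN)
    finally show ?thesis using False by simp
  qed simp
  have "Sfun R * (1 - y ^ N) = usm (1 / of_nat N) (\<Sum>k<N. F (of_real R * \<omega> ^ k) * (1 - y ^ N))"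
    by (simp add: Sfun_def usm_mult_left sum_distrib_right)
  also have "\<dots> = usm (1 / of_nat N) (\<Sum>k<N. \<Sum>m<N. usm ((\<omega> ^ k) ^ m) (y ^ m))"
    by (simp only: fk)
  also have "(\<Sum>k<N. \<Sum>m<N. usm ((\<omega> ^ k) ^ m) (y ^ m)) = (\<Sum>m<N. \<Sum>k<N. usm ((\<omega> ^ k) ^ m) (y ^ m))"
    by (rule sum.swap)
  also have "(\<Sum>m<N. \<Sum>k<N. usm ((\<omega> ^ k) ^ m) (y ^ m)) = (\<Sum>m<N. usm (if m = 0 then of_nat N else 0) (y ^ m))"
    by (intro sum.cong refl) (simp add: sum_usm_const cs)
  also have "\<dots> = usm (of_nat N) 1"
  proof -
    have "(\<Sum>m<N. usm (if m = 0 then of_nat N else 0) (y ^ m)) = (\<Sum>m\<in>{0}. usm (of_nat N) (y ^ m))"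
      using N by (intro sum.mono_neutral_cong_right) auto
    thus ?thesis by simp
  qed
  finally show ?thesis using N by (simp add: y_def usm_usm)
qed

end
end


lemma cmod_cis_minus_1: "cmod (cis t - 1) \<le> \<bar>t\<bar>"
proof -
  have "(cmod (cis t - 1))^2 = (cos t - 1)^2 + (sin t)^2" by (simp add: cmod_power2)
  also have "\<dots> = 2 - 2 * cos t" by (simp add: power2_eq_square algebra_simps sin_squared_eq)
  also have "cos t = 1 - 2 * sin (t/2) ^ 2" using cos_double_sin[of "t/2"] by simp
  also have "2 - 2 * (1 - 2 * sin (t/2) ^ 2) = (2 * sin (t/2))^2" by (simp add: power2_eq_square)
  also have "\<dots> \<le> t^2"
  proof -
    have "\<bar>2 * sin (t/2)\<bar> \<le> \<bar>t\<bar>" using abs_sin_x_le_abs_x[of "t/2"] by simp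
    thus ?thesis by (metis abs_le_square_iff)
  qed
  finally have "(cmod (cis t - 1))^2 \<le> \<bar>t\<bar>^2" by simp
  thus ?thesis by (rule power2_le_imp_le) simp
qed

lemma omega_props:
  assumes N: "N \<ge> 2"
  defines "\<omega> \<equiv> cis (2 * pi / real N)"
  shows "cmod \<omega> = 1" "\<omega> ^ N = 1" "\<And>m. 0 < m \<Longrightarrow> m < N \<Longrightarrow> \<omega> ^ m \<noteq> 1"
    "(\<Sum>k<N. \<omega> ^ k) = 0" "cmod (\<omega> - 1) \<le> 2 * pi / N"
proof -
  show "cmod \<omega> = 1" by (simp add: \<omega>_def)
  have "\<omega> ^ N = cis (real N * (2 * pi / real N))" by (simp only: \<omega>_def Complex.DeMoivre)
  also have "\<dots> = 1" using N by simp
  finally show wN: "\<omega> ^ N = 1" .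
  show ne: "\<omega> ^ m \<noteq> 1" if m: "0 < m" "m < N" for m
  proof
    assume "\<omega> ^ m = 1"
    hence "cos (2 * pi * m / N) = 1" by (simp add: \<omega>_def Complex.DeMoivre complex_eq_iff mult_ac)
    then obtain k :: int where k: "2 * pi * m / N = k * 2 * pi" by (auto simp: cos_one_2pi_int)
    hence "real m = k * N" using N by (simp add: field_simps)
    hence "int m = k * int N" by (metis of_int_eq_iff of_int_mult of_int_of_nat_eq)
    moreover have "k \<ge> 1"
    proof (rule ccontr)
      assume "\<not> k \<ge> 1" hence "k \<le> 0" by simp
      hence "k * int N \<le> 0" using N by (simp add: mult_nonpos_nonneg)
      thus False using \<open>int m = k * int N\<close> m by simp
    qed
    ultimately have "int m \<ge> int N" using mult_right_mono[of 1 k "int N"] by simp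
    thus False using m by simp
  qed
  have "\<omega> \<noteq> 1" using ne[of 1] N by simp
  thus "(\<Sum>k<N. \<omega> ^ k) = 0" by (simp add: geometric_sum wN)
  show "cmod (\<omega> - 1) \<le> 2 * pi / N"
    using cmod_cis_minus_1[of "2 * pi / N"] by (simp add: \<omega>_def)
qed

lemma inv_local:
  fixes c :: "'a::cstar_algebra"
  assumes i0: "uinv (1 - usm \<mu>0 (uel c)) v0" and i1: "uinv (1 - usm \<mu> (uel c)) v"
    and d: "cmod (\<mu> - \<mu>0) * (unorm v0 * norm c) \<le> 1/2"
  shows "unorm v \<le> 2 * unorm v0"
proof -
  define w where "w = usm (\<mu> - \<mu>0) (v0 * uel c)"
  have wx: "w = uel (uvc w)" by (simp add: unz_eq_iff w_def)
  have "unorm w \<le> cmod (\<mu> - \<mu>0) * (unorm v0 * norm c)"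
    unfolding w_def unorm_usm using unorm_mult[of v0 "uel c"] by (simp add: mult_left_mono)
  hence "norm (uvc w) \<le> 1/2" using d wx by (metis order_trans unorm_uel)
  then obtain u where u: "uinv (1 - uel (uvc w)) u" "unorm u \<le> 2" using neumann_half by blast
  have "(1 - usm \<mu>0 (uel c)) * (1 - w) = 1 - usm \<mu> (uel c)"
  proof -
    have "(1 - usm \<mu>0 (uel c)) * w = usm (\<mu> - \<mu>0) (((1 - usm \<mu>0 (uel c)) * v0) * uel c)"
      by (simp add: w_def usm_mult_right mult.assoc)
    also have "\<dots> = usm (\<mu> - \<mu>0) (uel c)" using i0 by (simp add: uinv_def)
    finally have "(1 - usm \<mu>0 (uel c)) * w = usm (\<mu> - \<mu>0) (uel c)" .
    hence "(1 - usm \<mu>0 (uel c)) * (1 - w) = 1 - usm \<mu>0 (uel c) - usm (\<mu> - \<mu>0) (uel c)"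
      by (simp add: right_diff_distrib)
    also have "\<dots> = 1 - usm \<mu> (uel c)" by (simp add: unz_eq_iff scaleC_diff_left algebra_simps)
    finally show ?thesis .
  qed
  hence "uinv (1 - usm \<mu> (uel c)) (u * v0)" using uinv_mult[OF i0, of "1 - w" u] u(1) wx by simp
  hence "v = u * v0" using uinv_unique i1 by blast
  hence "unorm v \<le> unorm u * unorm v0" using unorm_mult by simp
  also have "\<dots> \<le> 2 * unorm v0" using mult_right_mono[OF u(2) unorm_ge0[of v0]] .
  finally show ?thesis .
qed

lemma inv_bounded:
  fixes c :: "'a::cstar_algebra"
  assumes i: "\<And>\<mu>. cmod \<mu> \<le> R \<Longrightarrow> uinv (1 - usm \<mu> (uel c)) (F \<mu>)"
  shows "\<exists>K. \<forall>\<mu>. cmod \<mu> \<le> R \<longrightarrow> unorm (F \<mu>) \<le> K"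
proof -
  define \<delta> where "\<delta> \<mu>0 = 1 / (2 * (unorm (F \<mu>0) * norm c + 1))" for \<mu>0
  have dpos: "\<delta> \<mu>0 > 0" for \<mu>0 unfolding \<delta>_def using mult_nonneg_nonneg[OF unorm_ge0[of "F \<mu>0"] norm_ge_zero[of c]] by simp
  have loc: "unorm (F \<mu>) \<le> 2 * unorm (F \<mu>0)" if "cmod \<mu>0 \<le> R" "cmod \<mu> \<le> R" "\<mu> \<in> ball \<mu>0 (\<delta> \<mu>0)" for \<mu> \<mu>0
  proof (rule inv_local[OF i[OF that(1)] i[OF that(2)]])
    have a: "cmod (\<mu> - \<mu>0) < \<delta> \<mu>0" using that(3) by (simp add: dist_norm norm_minus_commute)
    have b: "0 \<le> unorm (F \<mu>0) * norm c" using mult_nonneg_nonneg[OF unorm_ge0[of "F \<mu>0"] norm_ge_zero[of c]] .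
    have "cmod (\<mu> - \<mu>0) * (unorm (F \<mu>0) * norm c) \<le> \<delta> \<mu>0 * (unorm (F \<mu>0) * norm c)"
      using a b by (intro mult_right_mono) auto
    also have "\<dots> \<le> 1/2" unfolding \<delta>_def using b by (simp add: field_simps)
    finally show "cmod (\<mu> - \<mu>0) * (unorm (F \<mu>0) * norm c) \<le> 1/2" .
  qed
  have "cball 0 R \<subseteq> (\<Union>\<mu>0\<in>cball 0 R. ball \<mu>0 (\<delta> \<mu>0))"
    using dpos by force
  then obtain T where T: "T \<subseteq> cball 0 R" "finite T" "cball 0 R \<subseteq> (\<Union>\<mu>0\<in>T. ball \<mu>0 (\<delta> \<mu>0))"
    using compactE_image[OF compact_cball, of "cball 0 R" "\<lambda>\<mu>0. ball \<mu>0 (\<delta> \<mu>0)"] by blast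
  show ?thesis
  proof (intro exI allI impI)
    fix \<mu> :: complex assume m: "cmod \<mu> \<le> R"
    then obtain t where t: "t \<in> T" "\<mu> \<in> ball t (\<delta> t)" using T(3) by fastforce
    have "unorm (F \<mu>) \<le> 2 * unorm (F t)" using loc[of t \<mu>] t T(1) m by auto
    also have "\<dots> \<le> (\<Sum>s\<in>T. 2 * unorm (F s))"
      using t T(2) unorm_ge0 by (intro member_le_sum) auto
    finally show "unorm (F \<mu>) \<le> (\<Sum>s\<in>T. 2 * unorm (F s))" .
  qed
qed


lemma sa_norm_le:
  fixes c :: "'a::cstar_algebra"
  assumes sa: "adj c = c" and M: "M \<ge> 0"
    and qi: "\<And>l. cmod l > M \<Longrightarrow> quasi_invertible (scaleC (1/l) c)"
  shows "norm c \<le> M"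
proof (rule dense_ge)
  fix r assume rM: "M < r"
  hence r0: "r > 0" using M by simp
  define R where "R = 1 / r"
  have R0: "R > 0" using r0 by (simp add: R_def)
  define z where "z = uel c"
  have uinvt: "uinvertible (1 - usm \<mu> z)" if "cmod \<mu> \<le> R" for \<mu>
  proof (cases "\<mu> = 0")
    case True
    then show ?thesis by (auto simp: uinvertible_def uinv_def intro: exI[of _ 1])
  next
    case False
    have "cmod (1/\<mu>) \<ge> r" using that False r0 by (simp add: R_def norm_divide field_simps)
    hence "M < cmod (1/\<mu>)" using rM by linarith
    hence "quasi_invertible (scaleC (1 / (1/\<mu>)) c)" by (rule qi)
    hence "uinvertible (1 - uel (scaleC \<mu> c))" by (simp add: quasi_inv_iff)
    thus ?thesis by (simp add: z_def uel_scaleC)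
  qed
  define F where "F \<mu> = (SOME v. uinv (1 - usm \<mu> z) v)" for \<mu>
  have Fi: "uinv (1 - usm \<mu> z) (F \<mu>)" if "cmod \<mu> \<le> R" for \<mu>
    using uinvt[OF that] unfolding F_def uinvertible_def by (rule someI_ex)
  obtain K where K: "\<And>\<mu>. cmod \<mu> \<le> R \<Longrightarrow> unorm (F \<mu>) \<le> K"
    using inv_bounded[of R c F] Fi unfolding z_def by blast
  have inv1: "F \<mu> * (1 - usm \<mu> z) = 1" and inv2: "(1 - usm \<mu> z) * F \<mu> = 1" if "cmod \<mu> \<le> R" for \<mu>
    using Fi[OF that] by (simp_all add: uinv_def)
  have comm2: "F \<mu> * z = z * F \<mu>" if "cmod \<mu> \<le> R" for \<mu>
  proof (rule uinv_commute[OF Fi[OF that]])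
    show "(1 - usm \<mu> z) * z = z * (1 - usm \<mu> z)"
      by (simp add: algebra_simps usm_mult_left usm_mult_right)
  qed
  have Lz: "unorm z \<le> norm c" by (simp add: z_def)
  define C where "C = (2 * pi + 1) * R^2 * ((norm c)^2 * K^3)"
  obtain j where j: "2 * C + 2 < (2::real) ^ j" using real_arch_pow[of 2 "2 * C + 2"] by auto
  define N :: nat where "N = 2 ^ j"
  have Nr: "real N = 2 ^ j" by (simp add: N_def)
  have C0: "C \<ge> 0"
  proof -
    have "K \<ge> 0" using K[of 0] unorm_ge0[of "F 0"] R0 by simp
    thus ?thesis by (simp add: C_def)
  qed
  have "real N > 2" using j C0 Nr by simp
  hence N2: "N \<ge> 2" by linarith
  define \<omega> where "\<omega> = cis (2 * pi / real N)"
  note om = omega_props[OF N2, folded \<omega>_def]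
  have Sb: "unorm (Sfun F \<omega> N R - 1) \<le> C / N"
    unfolding C_def
    by (rule S_chain[OF R0 inv1 inv2 comm2 K Lz N2 om(1) om(2) om(4) om(5)])
  have Si: "Sfun F \<omega> N R * (1 - (usm (of_real R) z) ^ N) = 1"
    by (rule S_inverse[OF R0 inv1 inv2 comm2 K Lz N2 om(1) om(2) om(4) om(3)])
  define Y where "Y = (usm (of_real R) z) ^ N"
  define s where "s = unorm (Sfun F \<omega> N R - 1)"
  have s_le: "s \<le> C / N" using Sb by (simp add: s_def)
  have CN: "C / N < 1/2" using j Nr N2 by (simp add: field_simps)
  have YS: "Y = (Sfun F \<omega> N R - 1) * (1 - Y)"
    using Si by (simp add: Y_def algebra_simps)
  have "unorm Y \<le> s * unorm (1 - Y)" unfolding s_def by (subst YS) (rule unorm_mult)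
  also have "\<dots> \<le> s * (1 + unorm Y)"
    using unorm_diff[of 1 Y] by (intro mult_left_mono) (auto simp: s_def unorm_ge0)
  finally have "unorm Y \<le> s + s * unorm Y" by (simp add: algebra_simps)
  hence Yb: "unorm Y < 1"
  proof -
    have "s \<le> 1/2" using s_le CN by linarith
    hence "s * unorm Y \<le> (1/2) * unorm Y" using unorm_ge0[of Y] by (rule mult_right_mono)
    thus ?thesis using \<open>unorm Y \<le> s + s * unorm Y\<close> s_le CN by linarith
  qed
  have Yeq: "Y = usm (of_real (R ^ N)) (uel (cpow c (N - 1)))"
  proof -
    have "Y = usm ((of_real R) ^ N) (z ^ N)" by (simp add: Y_def usm_power)
    also have "z ^ N = uel (cpow c (N - 1))"
      using N2 uel_power[of c "N - 1"] by (simp add: z_def)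
    finally show ?thesis by simp
  qed
  have "unorm Y = R ^ N * norm (cpow c (2 ^ j - 1))"
    using R0 by (simp add: Yeq unorm_usm N_def norm_power del: of_real_power)
  also have "\<dots> = (R * norm c) ^ N" using norm_cpow_sa[OF sa, of j] by (simp add: N_def power_mult_distrib)
  finally have "(R * norm c) ^ N < 1" using Yb by simp
  hence "R * norm c < 1" using power_less_one_iff[of "R * norm c" N] R0 by simp
  thus "norm c \<le> r" using r0 by (simp add: R_def field_simps)
qed


definition pev :: "complex poly \<Rightarrow> 'a::cstar_algebra unz \<Rightarrow> 'a unz" where
  "pev p u = (\<Sum>i<Suc (degree p). usm (coeff p i) (u ^ i))"

lemma pev_eq: "degree p < n \<Longrightarrow> pev p u = (\<Sum>i<n. usm (coeff p i) (u ^ i))"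
  unfolding pev_def
  by (rule sum.mono_neutral_left) (auto simp: coeff_eq_0)

lemma pev_add: "pev (p + q) u = pev p u + pev q u"
proof -
  define n where "n = Suc (max (degree p) (degree q))"
  have "degree (p + q) < n" using degree_add_le_max[of p q] by (simp add: n_def)
  thus ?thesis
    by (simp add: pev_eq[of _ n] n_def sum.distrib usm_add_left)
qed

lemma pev_smult: "pev (smult a p) u = usm a (pev p u)"
proof -
  have "degree (smult a p) < Suc (degree p)" using degree_smult_le[of a p] by simp
  hence "pev (smult a p) u = (\<Sum>i<Suc (degree p). usm (coeff (smult a p) i) (u ^ i))" by (rule pev_eq)
  also have "\<dots> = (\<Sum>i<Suc (degree p). usm a (usm (coeff p i) (u ^ i)))"
    by (simp only: coeff_smult usm_usm)
  also have "\<dots> = usm a (pev p u)" by (simp only: pev_def usm_sum)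
  finally show ?thesis .
qed

lemma pev_pCons: "pev (pCons a p) u = usm a 1 + u * pev p u"
proof -
  define n where "n = Suc (degree p)"
  have d: "degree (pCons a p) < Suc n" using degree_pCons_le[of a p] by (simp add: n_def)
  have "pev (pCons a p) u = (\<Sum>i<Suc n. usm (coeff (pCons a p) i) (u ^ i))" by (rule pev_eq[OF d])
  also have "\<dots> = usm a 1 + (\<Sum>i<n. usm (coeff p i) (u ^ Suc i))"
    unfolding sum.lessThan_Suc_shift by simp
  also have "(\<Sum>i<n. usm (coeff p i) (u ^ Suc i)) = u * pev p u"
    by (simp only: pev_def n_def sum_distrib_left usm_mult_right power_Suc)
  finally show ?thesis .
qed

lemma pev_0[simp]: "pev 0 u = 0" by (simp add: pev_def)

lemma pev_const: "pev [:a:] u = usm a 1" by (simp add: pev_def)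

lemma pev_mult: "pev (p * q) u = pev p u * pev q u"
proof (induction p rule: pCons_induct)
  case 0 then show ?case by simp
next
  case (pCons a p)
  have "pev (pCons a p * q) u = usm a (pev q u) + u * pev (p * q) u"
    by (simp add: pev_add pev_smult pev_pCons)
  also have "\<dots> = (usm a 1 + u * pev p u) * pev q u"
    using pCons.IH by (simp add: distrib_right usm_mult_left mult.assoc)
  finally show ?case by (simp add: pev_pCons)
qed

lemma pev_one[simp]: "pev 1 u = 1"
  using pev_const[of 1 u] by (simp add: one_pCons)

lemma pev_lin: "pev [:- m, 1:] u = u - usm m 1"
  by (simp add: pev_pCons pev_const unz_eq_iff)

lemma pev_prod_invertible:
  fixes n :: nat
  shows "(\<And>i. i < n \<Longrightarrow> uinvertible (pev (f i) u)) \<Longrightarrow> uinvertible (pev (\<Prod>i<n. f i) u)"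
proof (induction n)
  case 0
  then show ?case by (auto simp: uinvertible_def uinv_def intro: exI[of _ 1])
next
  case (Suc n)
  have "pev (\<Prod>i<Suc n. f i) u = pev (\<Prod>i<n. f i) u * pev (f n) u"
    by (simp add: pev_mult)
  thus ?case using Suc by (simp add: uinvertible_mult)
qed

lemma uel_sum: "uel (sum f A) = (\<Sum>i\<in>A. uel (f i::'a::cstar_algebra))"
  by (induction A rule: infinite_finite_induct) (auto simp: uel_add)

lemma pev_map_real:
  fixes q :: "real poly" and b :: "'a::cstar_algebra"
  assumes "poly q 0 = 0"
  shows "pev (map_poly complex_of_real q) (uel b) = uel (peval q b)"
proof -
  define d where "d = degree q"
  have dm: "degree (map_poly complex_of_real q) = d"
    by (simp add: d_def degree_map_poly)
  have c0: "coeff q 0 = 0" using assms by (simp add: poly_0_coeff_0)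
  have "pev (map_poly complex_of_real q) (uel b) = (\<Sum>i<Suc d. usm (of_real (coeff q i)) (uel b ^ i))"
    by (simp add: pev_def dm coeff_map_poly)
  also have "\<dots> = (\<Sum>i<d. usm (of_real (coeff q (Suc i))) (uel b ^ Suc i))"
    unfolding sum.lessThan_Suc_shift by (simp add: c0)
  also have "\<dots> = (\<Sum>i<d. uel (coeff q (Suc i) *\<^sub>R cpow b i))"
    by (intro sum.cong refl) (simp only: uel_power scaleR_scaleC uel_scaleC)
  also have "\<dots> = uel (peval q b)"
    by (simp add: peval_def d_def uel_sum)
  finally show ?thesis .
qed

lemma positive_spectrum:
  fixes b :: "'a::cstar_algebra"
  assumes "positive b" "l \<in> spectrum b"
  shows "\<exists>t. l = of_real t \<and> 0 \<le> t \<and> t \<le> norm b"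
proof -
  obtain t where t: "l = of_real t" "t \<ge> 0" using assms by (auto simp: positive_def)
  have "cmod l \<le> norm b" by (rule spectrum_bound[OF assms(2)])
  thus ?thesis using t by auto
qed

lemma zero_in_spectrum: "0 \<in> spectrum a" by (simp add: spectrum_def)

lemma adj_peval: "adj b = b \<Longrightarrow> adj (peval q b) = peval q (b::'a::cstar_algebra)"
  by (simp add: peval_def adj_sum adj_scaleR adj_cpow)

lemma K_bound:
  fixes b :: "'a::cstar_algebra" and q :: "real poly"
  assumes pos: "positive b" and q0: "poly q 0 = 0" and M: "M \<ge> 0"
    and qb: "\<And>t. 0 \<le> t \<Longrightarrow> t \<le> norm b \<Longrightarrow> \<bar>poly q t\<bar> \<le> M"
  shows "norm (peval q b) \<le> M"
proof (rule sa_norm_le)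
  show "adj (peval q b) = peval q b" using pos by (simp add: adj_peval positive_def)
  show "M \<ge> 0" by (rule M)
  fix l :: complex assume l: "M < cmod l"
  hence l0: "l \<noteq> 0" using M by auto
  define P where "P = [:l:] - map_poly complex_of_real q"
  have pm: "poly (map_poly complex_of_real q) (of_real t) = of_real (poly q t)" for t
    by (induction q) (auto simp: map_poly_pCons)
  have P0: "poly P 0 = l" using pm[of 0] q0 by (simp add: P_def)
  hence Pne: "P \<noteq> 0" using l0 by auto
  obtain root where fac: "smult (lead_coeff P) (\<Prod>i<degree P. [:-root i, 1:]) = P"
    using complex_poly_decompose' by blast
  have lc: "lead_coeff P \<noteq> 0" using Pne by simp
  have rt: "poly P (root i) = 0" if "i < degree P" for i
  proof -
    have "poly P (root i) = lead_coeff P * (\<Prod>j<degree P. poly [:-root j, 1:] (root i))"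
      by (subst fac[symmetric]) (simp add: poly_prod)
    also have "(\<Prod>j<degree P. poly [:-root j, 1:] (root i)) = 0"
      using that by (intro prod_zero) auto
    finally show ?thesis by simp
  qed
  have inv_fac: "uinvertible (pev [:-root i, 1:] (uel b))" if "i < degree P" for i
  proof -
    have ns: "root i \<notin> spectrum b"
    proof
      assume "root i \<in> spectrum b"
      then obtain t where t: "root i = of_real t" "0 \<le> t" "t \<le> norm b"
        using positive_spectrum[OF pos] by blast
      have "l - of_real (poly q t) = 0" using rt[OF that] by (simp add: P_def t(1) pm)
      hence "cmod l = \<bar>poly q t\<bar>" by (simp add: right_minus_eq)
      thus False using qb[OF t(2) t(3)] l by simp
    qed
    hence r0: "root i \<noteq> 0" using zero_in_spectrum by metis
    have "uinvertible (usm (root i) 1 - uel b)" using spectrum_iff[OF r0, of b] ns by simp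
    hence "uinvertible (usm (-1) (usm (root i) 1 - uel b))" by (simp add: uinvertible_usm)
    moreover have "usm (-1) (usm (root i) 1 - uel b) = pev [:-root i, 1:] (uel b)"
      by (simp add: pev_lin unz_eq_iff scaleC_minus_left scaleC_one)
    ultimately show ?thesis by simp
  qed
  have "uinvertible (pev (\<Prod>i<degree P. [:-root i, 1:]) (uel b))"
    by (rule pev_prod_invertible) (rule inv_fac)
  hence "uinvertible (pev P (uel b))"
    by (subst fac[symmetric]) (simp add: pev_smult uinvertible_usm[OF lc])
  moreover have "pev P (uel b) = usm l 1 - uel (peval q b)"
  proof -
    have Pe: "P = [:l:] + smult (-1) (map_poly complex_of_real q)" by (simp add: P_def)
    have "pev P (uel b) = pev [:l:] (uel b) + usm (-1) (pev (map_poly complex_of_real q) (uel b))"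
      by (simp only: Pe pev_add pev_smult)
    hence "pev P (uel b) = usm l 1 + usm (-1) (uel (peval q b))"
      by (simp only: pev_const pev_map_real[OF q0])
    thus ?thesis by (simp add: unz_eq_iff scaleC_minus_left scaleC_one)
  qed
  ultimately have "l \<notin> spectrum (peval q b)" using spectrum_iff[OF l0, of "peval q b"] by simp
  thus "quasi_invertible (scaleC (1 / l) (peval q b))" using l0 by (simp add: spectrum_def)
qed


lemma cpoly_add: "map_poly complex_of_real (p + q) = map_poly complex_of_real p + map_poly complex_of_real q"
  by (rule poly_eqI) (simp add: coeff_map_poly)

lemma cpoly_diff: "map_poly complex_of_real (p - q) = map_poly complex_of_real p - map_poly complex_of_real q"
  by (rule poly_eqI) (simp add: coeff_map_poly)

lemma cpoly_mult: "map_poly complex_of_real (p * q) = map_poly complex_of_real p * map_poly complex_of_real q"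
  by (rule poly_eqI) (simp add: coeff_map_poly coeff_mult)

lemma uel_inj: "uel x = uel y \<Longrightarrow> x = y"
  by (simp add: unz_eq_iff)

lemma peval_diff:
  assumes "poly p 0 = 0" "poly q 0 = 0"
  shows "peval (p - q) b = peval p b - peval (q::real poly) (b::'a::cstar_algebra)"
proof (rule uel_inj)
  have "poly (p - q) 0 = 0" using assms by simp
  hence "uel (peval (p - q) b) = pev (map_poly complex_of_real p + smult (-1) (map_poly complex_of_real q)) (uel b)"
    by (simp add: pev_map_real[symmetric] cpoly_diff)
  also have "\<dots> = uel (peval p b) + usm (-1) (uel (peval q b))"
    by (simp only: pev_add pev_smult pev_map_real assms)
  also have "\<dots> = uel (peval p b - peval q b)"
    by (simp add: unz_eq_iff scaleC_minus_left scaleC_one)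
  finally show "uel (peval (p - q) b) = uel (peval p b - peval q b)" .
qed

lemma peval_mult:
  assumes "poly p 0 = 0" "poly q 0 = 0"
  shows "peval (p * q) b = peval p b * peval (q::real poly) (b::'a::cstar_algebra)"
proof (rule uel_inj)
  have "poly (p * q) 0 = 0" using assms by simp
  thus "uel (peval (p * q) b) = uel (peval p b * peval q b)"
    by (simp add: pev_map_real[symmetric] assms cpoly_mult uel_mult[symmetric] pev_mult)
qed

lemma peval_id: "peval [:0, 1:] (b::'a::cstar_algebra) = b"
  by (simp add: peval_def)

lemma rpf_poly:
  fixes g :: "real \<Rightarrow> real"
  assumes "real_polynomial_function g"
  shows "\<exists>p. \<forall>x. g x = poly p x"
  using assms
proof (induction rule: real_polynomial_function.induct)
  case (linear f)
  have "f x = poly [:0, f 1:] x" for x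
    using linear_scale_real[OF bounded_linear.linear[OF linear], of x 1] by simp
  thus ?case by blast
next
  case (const c)
  have "c = poly [:c:] x" for x by simp
  thus ?case by blast
next
  case (add f g)
  then obtain p q where "\<forall>x. f x = poly p x" "\<forall>x. g x = poly q x" by blast
  hence "\<forall>x. f x + g x = poly (p + q) x" by simp
  thus ?case by blast
next
  case (mult f g)
  then obtain p q where "\<forall>x. f x = poly p x" "\<forall>x. g x = poly q x" by blast
  hence "\<forall>x. f x * g x = poly (p * q) x" by simp
  thus ?case by blast
qed

definition approx :: "real \<Rightarrow> (real \<Rightarrow> real) \<Rightarrow> (nat \<Rightarrow> real poly) \<Rightarrow> bool" where
  "approx B f p \<longleftrightarrow> (\<forall>n. poly (p n) 0 = 0) \<and> uniform_limit {0..B} (\<lambda>n x. poly (p n) x) f sequentially"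

lemma approx_exists:
  assumes f: "continuous_on {0..B} f" and f0: "f 0 = 0" and B: "B \<ge> 0"
  shows "\<exists>p. approx B f p"
proof -
  have "\<exists>p. poly p 0 = 0 \<and> (\<forall>x\<in>{0..B}. \<bar>f x - poly p x\<bar> < 2 / Suc n)" for n
  proof -
    obtain g where g: "real_polynomial_function g" "\<And>x. x \<in> {0..B} \<Longrightarrow> \<bar>f x - g x\<bar> < 1 / Suc n"
      using Stone_Weierstrass_real_polynomial_function[OF compact_Icc f, of "1 / Suc n"] by auto
    obtain r where r: "\<forall>x. g x = poly r x" using rpf_poly[OF g(1)] by blast
    define p where "p = r - [:poly r 0:]"
    have p0: "poly p 0 = 0" by (simp add: p_def)
    have g0: "\<bar>poly r 0\<bar> < 1 / Suc n" using g(2)[of 0] B r f0 by simp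
    have "\<bar>f x - poly p x\<bar> < 2 / Suc n" if "x \<in> {0..B}" for x
    proof -
      have "\<bar>f x - poly p x\<bar> \<le> \<bar>f x - poly r x\<bar> + \<bar>poly r 0\<bar>" by (simp add: p_def)
      also have "\<dots> < 1 / Suc n + 1 / Suc n" using g(2)[OF that] g0 r by (intro add_strict_mono) auto
      finally show ?thesis by simp
    qed
    thus ?thesis using p0 by blast
  qed
  then obtain P where P: "\<And>n. poly (P n) 0 = 0" "\<And>n x. x \<in> {0..B} \<Longrightarrow> \<bar>f x - poly (P n) x\<bar> < 2 / Suc n"
    by metis
  have "uniform_limit {0..B} (\<lambda>n x. poly (P n) x) f sequentially"
  proof (rule uniform_limitI)
    fix e :: real assume e: "e > 0"
    obtain N where N: "N > 0" "inverse (real N) < e / 2" using ex_inverse_of_nat_less[of "e/2"] e by auto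
    show "\<forall>\<^sub>F n in sequentially. \<forall>x\<in>{0..B}. dist (poly (P n) x) (f x) < e"
    proof (rule eventually_sequentiallyI[of N])
      fix n assume n: "N \<le> n"
      have "2 / real (Suc n) \<le> 2 / real N" using N n by (intro divide_left_mono) auto
      also have "\<dots> < e" using N by (simp add: field_simps)
      finally have "2 / real (Suc n) < e" .
      show "\<forall>x\<in>{0..B}. dist (poly (P n) x) (f x) < e"
      proof
        fix x assume "x \<in> {0..B}"
        hence "\<bar>f x - poly (P n) x\<bar> < 2 / Suc n" by (rule P(2))
        thus "dist (poly (P n) x) (f x) < e"
          using \<open>2 / real (Suc n) < e\<close> by (simp add: dist_real_def abs_minus_commute)
      qed
    qed
  qed
  thus ?thesis using P(1) by (auto simp: approx_def)
qed


context
  fixes b :: "'a::cstar_algebra"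
  assumes pos: "positive b"
begin

lemma approx_diff_small:
  assumes p: "approx (norm b) f p" and p': "approx (norm b) g p'" and e: "e > 0"
    and fg: "\<forall>x\<in>{0..norm b}. \<bar>f x - g x\<bar> \<le> d"
  shows "\<exists>N. \<forall>n\<ge>N. norm (peval (p n) b - peval (p' n) b) \<le> d + e"
proof -
  have u1: "\<forall>\<^sub>F n in sequentially. \<forall>x\<in>{0..norm b}. dist (poly (p n) x) (f x) < e/2"
    using p e unfolding approx_def by (intro uniform_limitD) auto
  have u2: "\<forall>\<^sub>F n in sequentially. \<forall>x\<in>{0..norm b}. dist (poly (p' n) x) (g x) < e/2"
    using p' e unfolding approx_def by (intro uniform_limitD) auto
  obtain N where N: "\<And>n. n \<ge> N \<Longrightarrow> (\<forall>x\<in>{0..norm b}. dist (poly (p n) x) (f x) < e/2) \<and>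
      (\<forall>x\<in>{0..norm b}. dist (poly (p' n) x) (g x) < e/2)"
    using eventually_conj[OF u1 u2] unfolding eventually_sequentially by blast
  have "norm (peval (p n) b - peval (p' n) b) \<le> d + e" if n: "n \<ge> N" for n
  proof -
    have z: "poly (p n) 0 = 0" "poly (p' n) 0 = 0" using p p' by (auto simp: approx_def)
    have d0: "d \<ge> 0" using fg[rule_format, of 0] by simp
    have "norm (peval (p n - p' n) b) \<le> d + e"
    proof (rule K_bound[OF pos])
      show "poly (p n - p' n) 0 = 0" using z by simp
      show "0 \<le> d + e" using d0 e by simp
      fix t assume t: "0 \<le> t" "t \<le> norm b"
      have a: "\<bar>poly (p n) t - f t\<bar> < e/2" "\<bar>poly (p' n) t - g t\<bar> < e/2"
        using N[OF n] t by (auto simp: dist_real_def)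
      have "\<bar>f t - g t\<bar> \<le> d" using fg t by auto
      thus "\<bar>poly (p n - p' n) t\<bar> \<le> d + e" using a by (simp only: poly_diff; linarith)
    qed
    thus ?thesis using z by (simp add: peval_diff)
  qed
  thus ?thesis by blast
qed

lemma approx_cauchy:
  assumes p: "approx (norm b) f p"
  shows "convergent (\<lambda>n. peval (p n) b)"
proof -
  have "Cauchy (\<lambda>n. peval (p n) b)"
  proof (rule CauchyI)
    fix e :: real assume e: "e > 0"
    have u: "\<forall>\<^sub>F n in sequentially. \<forall>x\<in>{0..norm b}. dist (poly (p n) x) (f x) < e/4"
      using p e unfolding approx_def by (intro uniform_limitD) auto
    then obtain N where N: "\<And>n. n \<ge> N \<Longrightarrow> \<forall>x\<in>{0..norm b}. dist (poly (p n) x) (f x) < e/4"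
      unfolding eventually_sequentially by blast
    have "norm (peval (p m) b - peval (p n) b) < e" if "m \<ge> N" "n \<ge> N" for m n
    proof -
      have z: "poly (p m) 0 = 0" "poly (p n) 0 = 0" using p by (auto simp: approx_def)
      have "norm (peval (p m - p n) b) \<le> e/2"
      proof (rule K_bound[OF pos])
        show "poly (p m - p n) 0 = 0" using z by simp
        show "0 \<le> e/2" using e by simp
        fix t assume t: "0 \<le> t" "t \<le> norm b"
        have a: "\<bar>poly (p m) t - f t\<bar> < e/4" "\<bar>poly (p n) t - f t\<bar> < e/4"
          using N[OF that(1)] N[OF that(2)] t by (auto simp: dist_real_def)
        thus "\<bar>poly (p m - p n) t\<bar> \<le> e/2" by (simp only: poly_diff; linarith)
      qed
      thus ?thesis using z e by (simp add: peval_diff)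
    qed
    thus "\<exists>M. \<forall>m\<ge>M. \<forall>n\<ge>M. norm (peval (p m) b - peval (p n) b) < e" by blast
  qed
  thus ?thesis by (simp add: Cauchy_convergent_iff)
qed

lemma approx_same_limit:
  assumes p: "approx (norm b) f p" and p': "approx (norm b) f p'"
    and L: "(\<lambda>n. peval (p n) b) \<longlonglongrightarrow> L"
  shows "(\<lambda>n. peval (p' n) b) \<longlonglongrightarrow> L"
proof -
  have "(\<lambda>n. peval (p n) b - peval (p' n) b) \<longlonglongrightarrow> 0"
  proof (rule LIMSEQ_I)
    fix r :: real assume r: "r > 0"
    obtain N where "\<forall>n\<ge>N. norm (peval (p n) b - peval (p' n) b) \<le> 0 + r/2"
      using approx_diff_small[OF p p', of "r/2" 0] r by auto
    thus "\<exists>no. \<forall>n\<ge>no. norm (peval (p n) b - peval (p' n) b - 0) < r" using r by force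
  qed
  from tendsto_diff[OF L this] show ?thesis by simp
qed

lemma fcalc_limit:
  assumes p: "approx (norm b) f p"
  shows "(\<lambda>n. peval (p n) b) \<longlonglongrightarrow> fcalc f b"
proof -
  obtain L where L: "(\<lambda>n. peval (p n) b) \<longlonglongrightarrow> L"
    using approx_cauchy[OF p] by (auto simp: convergent_def)
  have "fcalc f b = L"
    unfolding fcalc_def
  proof (rule the_equality)
    show "\<forall>p'. (\<forall>n. poly (p' n) 0 = 0) \<and> uniform_limit {0..norm b} (\<lambda>n x. poly (p' n) x) f sequentially
        \<longrightarrow> (\<lambda>n. peval (p' n) b) \<longlonglongrightarrow> L"
      using approx_same_limit[OF p _ L] unfolding approx_def by blast
    fix c assume "\<forall>p'. (\<forall>n. poly (p' n) 0 = 0) \<and> uniform_limit {0..norm b} (\<lambda>n x. poly (p' n) x) f sequentially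
        \<longrightarrow> (\<lambda>n. peval (p' n) b) \<longlonglongrightarrow> c"
    hence "(\<lambda>n. peval (p n) b) \<longlonglongrightarrow> c" using p unfolding approx_def by blast
    thus "c = L" using L LIMSEQ_unique by blast
  qed
  thus ?thesis using L by simp
qed

lemma fcalc_norm:
  assumes f: "continuous_on {0..norm b} f" and f0: "f 0 = 0"
    and M: "\<And>t. 0 \<le> t \<Longrightarrow> t \<le> norm b \<Longrightarrow> \<bar>f t\<bar> \<le> M"
  shows "norm (fcalc f b) \<le> M"
proof (rule field_le_epsilon)
  fix e :: real assume e: "e > 0"
  obtain p where p: "approx (norm b) f p" using approx_exists[OF f f0] by auto
  have p0: "approx (norm b) (\<lambda>x. 0) (\<lambda>n. 0)"
    by (simp add: approx_def uniform_limit_const)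
  have fb: "\<forall>x\<in>{0..norm b}. \<bar>f x - 0\<bar> \<le> M" using M by auto
  obtain N where N: "\<And>n. n \<ge> N \<Longrightarrow> norm (peval (p n) b - peval 0 b) \<le> M + e"
    using approx_diff_small[OF p p0 e fb] by auto
  have "eventually (\<lambda>n. norm (peval (p n) b) \<le> M + e) sequentially"
    using N by (auto simp: eventually_sequentially peval_def)
  thus "norm (fcalc f b) \<le> M + e"
    by (intro tendsto_upperbound[OF tendsto_norm[OF fcalc_limit[OF p]]]) auto
qed

lemma fcalc_cong:
  assumes f: "continuous_on {0..norm b} f" and f0: "f 0 = 0"
    and fg: "\<And>t. 0 \<le> t \<Longrightarrow> t \<le> norm b \<Longrightarrow> f t = g t"
  shows "fcalc f b = fcalc g b"
proof -
  obtain p where p: "approx (norm b) f p" using approx_exists[OF f f0] by auto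
  have "approx (norm b) g p"
    using p fg unfolding approx_def by (subst (asm) uniform_limit_cong'[of _ _ _ _ g]) auto
  thus ?thesis using fcalc_limit[OF p] fcalc_limit LIMSEQ_unique by blast
qed

lemma fcalc_mult:
  assumes f: "continuous_on {0..norm b} f" and f0: "f 0 = 0"
    and g: "continuous_on {0..norm b} g" and g0: "g 0 = 0"
  shows "fcalc (\<lambda>t. f t * g t) b = fcalc f b * fcalc g b"
proof -
  obtain p where p: "approx (norm b) f p" using approx_exists[OF f f0] by auto
  obtain r where r: "approx (norm b) g r" using approx_exists[OF g g0] by auto
  have bf: "bounded (f ` {0..norm b})" by (rule compact_imp_bounded[OF compact_continuous_image[OF f compact_Icc]])
  have bg: "bounded (g ` {0..norm b})" by (rule compact_imp_bounded[OF compact_continuous_image[OF g compact_Icc]])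
  have pr: "approx (norm b) (\<lambda>t. f t * g t) (\<lambda>n. p n * r n)"
    unfolding approx_def
  proof
    show "\<forall>n. poly (p n * r n) 0 = 0" using p r by (simp add: approx_def)
    have "uniform_limit {0..norm b} (\<lambda>n x. poly (p n) x * poly (r n) x) (\<lambda>t. f t * g t) sequentially"
      using p r bf bg unfolding approx_def by (intro uniform_lim_mult) auto
    thus "uniform_limit {0..norm b} (\<lambda>n x. poly (p n * r n) x) (\<lambda>t. f t * g t) sequentially" by simp
  qed
  have "(\<lambda>n. peval (p n * r n) b) \<longlonglongrightarrow> fcalc f b * fcalc g b"
    using tendsto_mult[OF fcalc_limit[OF p] fcalc_limit[OF r]] p r
    by (simp add: approx_def peval_mult)
  thus ?thesis using fcalc_limit[OF pr] LIMSEQ_unique by blast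
qed

lemma fcalc_id: "fcalc (\<lambda>t. t) b = b"
proof -
  have "approx (norm b) (\<lambda>t. t) (\<lambda>n. [:0, 1:])" by (simp add: approx_def uniform_limit_const)
  from fcalc_limit[OF this] show ?thesis by (simp add: peval_id LIMSEQ_const_iff)
qed

lemma tendsto_adj: "X \<longlonglongrightarrow> L \<Longrightarrow> (\<lambda>n. adj (X n)) \<longlonglongrightarrow> adj (L::'a)"
proof -
  assume X: "X \<longlonglongrightarrow> L"
  show ?thesis
  proof (rule LIMSEQ_I)
    fix r :: real assume "r > 0"
    then obtain N where "\<forall>n\<ge>N. norm (X n - L) < r" using LIMSEQ_D[OF X] by blast
    thus "\<exists>no. \<forall>n\<ge>no. norm (adj (X n) - adj L) < r"
      by (metis adj_diff norm_adj)
  qed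
qed

lemma fcalc_adj:
  assumes f: "continuous_on {0..norm b} f" and f0: "f 0 = 0"
  shows "adj (fcalc f b) = fcalc f b"
proof -
  obtain p where p: "approx (norm b) f p" using approx_exists[OF f f0] by auto
  have "(\<lambda>n. adj (peval (p n) b)) \<longlonglongrightarrow> adj (fcalc f b)" by (rule tendsto_adj[OF fcalc_limit[OF p]])
  moreover have "adj (peval (p n) b) = peval (p n) b" for n
    using pos by (simp add: adj_peval positive_def)
  ultimately show ?thesis using fcalc_limit[OF p] LIMSEQ_unique by auto
qed

end


lemma key_step:
  fixes a b :: "'a::cstar_algebra"
  assumes pos: "positive b"
    and H: "\<forall>f :: real \<Rightarrow> real. continuous_on {0..norm b} f \<and> f ` {0..norm b} \<subseteq> {0..1}
           \<and> f 0 = 0 \<and> f (norm b) \<noteq> 0 \<longrightarrow> cuntz_below a (fcalc f b)"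
    and e: "e > 0" "2 * e < norm b" and del: "\<delta> > 0"
  shows "\<exists>z. norm (adj z * b * z - a) < \<delta> \<and> norm z ^ 2 * (norm b - 2 * e) \<le> norm (adj z * b * z)"
proof -
  define B where "B = norm b"
  define c where "c = B - e"
  define d where "d = B - 2 * e"
  have d0: "d > 0" and cd: "d < c" and c0: "c > 0" and cB: "c < B" using e by (simp_all add: d_def c_def B_def)
  define f where "f t = max 0 (min 1 ((t - c) / e))" for t
  define m where "m t = sqrt (f t)" for t
  define r where "r t = t / (max t d * sqrt (max t d))" for t
  define g where "g t = r t * m t" for t
  have S: "{0..norm b} = {0..B}" by (simp add: B_def)
  have fc: "continuous_on {0..B} f" unfolding f_def by (intro continuous_intros) (use e in auto)
  have mc: "continuous_on {0..B} m" unfolding m_def by (intro continuous_intros fc)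
  have rc: "continuous_on {0..B} r" unfolding r_def
    by (intro continuous_intros) (use d0 in \<open>auto simp: max_def\<close>)
  have gc: "continuous_on {0..B} g" unfolding g_def by (intro continuous_intros rc mc)
  have f0: "f 0 = 0"
  proof -
    have "(0 - c) / e < 0" using c0 e by (simp add: divide_neg_pos)
    thus ?thesis by (simp add: f_def)
  qed
  have fB: "f B = 1" using e by (simp add: f_def c_def)
  have fnn: "f t \<ge> 0" for t by (simp add: f_def)
  have fim: "f ` {0..B} \<subseteq> {0..1}" by (auto simp: f_def)
  have m0: "m 0 = 0" by (simp add: m_def f0)
  have r0: "r 0 = 0" by (simp add: r_def)
  have g0: "g 0 = 0" by (simp add: g_def r0)
  have mm: "m t * m t = f t" for t by (simp add: m_def fnn)
  have gtg: "g t * t * g t = f t" if t: "0 \<le> t" for t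
  proof (cases "f t = 0")
    case True
    thus ?thesis by (simp add: g_def m_def)
  next
    case False
    have "t > c"
    proof (rule ccontr)
      assume "\<not> t > c"
      hence "(t - c) / e \<le> 0" using e by (simp add: divide_nonpos_pos)
      hence "f t = 0" by (simp add: f_def)
      thus False using False by simp
    qed
    hence tp: "t > 0" "max t d = t" using cd c0 by auto
    have "r t = 1 / sqrt t" using tp by (simp add: r_def field_simps)
    hence "g t * t * g t = (1 / sqrt t) * (1 / sqrt t) * t * (m t * m t)"
      by (simp add: g_def algebra_simps)
    also have "(1 / sqrt t) * (1 / sqrt t) * t = 1" using tp by (simp add: field_simps)
    finally show ?thesis by (simp add: mm)
  qed
  have rb: "\<bar>r t\<bar> \<le> 1 / sqrt d" if t: "0 \<le> t" "t \<le> B" for t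
  proof (cases "t \<le> d")
    case True
    hence "r t = t / (d * sqrt d)" by (simp add: r_def max_def)
    also have "\<dots> \<le> d / (d * sqrt d)" using True d0 by (intro divide_right_mono) auto
    also have "\<dots> = 1 / sqrt d" using d0 by simp
    finally show ?thesis using t d0 by (simp add: r_def)
  next
    case False
    hence "r t = 1 / sqrt t" using d0 by (simp add: r_def max_def field_simps)
    also have "\<dots> \<le> 1 / sqrt d" using False d0 by (intro divide_left_mono) auto
    finally show ?thesis using False d0 by (simp add: r_def)
  qed
  note fc' = fc[folded S] and mc' = mc[folded S] and rc' = rc[folded S] and gc' = gc[folded S]
  have idc: "continuous_on {0..norm b} (\<lambda>t::real. t)" by (intro continuous_intros)
  define FB where "FB = fcalc f b"
  define MM where "MM = fcalc m b"
  define RR where "RR = fcalc r b"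
  define GG where "GG = fcalc g b"
  have GRM: "GG = RR * MM"
  proof -
    have "g = (\<lambda>t. r t * m t)" by (rule ext) (simp add: g_def)
    hence "GG = fcalc (\<lambda>t. r t * m t) b" by (simp add: GG_def)
    thus ?thesis using fcalc_mult[OF pos rc' r0 mc' m0] by (simp add: RR_def MM_def)
  qed
  have MMF: "MM * MM = FB"
  proof -
    have "MM * MM = fcalc (\<lambda>t. m t * m t) b" using fcalc_mult[OF pos mc' m0 mc' m0] by (simp add: MM_def)
    also have "\<dots> = FB" unfolding FB_def
    proof (rule fcalc_cong[OF pos])
      show "continuous_on {0..norm b} (\<lambda>t. m t * m t)" by (rule continuous_on_mult[OF mc' mc'])
      show "m 0 * m 0 = 0" by (simp add: m0)
      show "\<And>t. 0 \<le> t \<Longrightarrow> t \<le> norm b \<Longrightarrow> m t * m t = f t" using mm by blast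
    qed
    finally show ?thesis .
  qed
  have GbG: "GG * b * GG = FB"
  proof -
    have c1: "continuous_on {0..norm b} (\<lambda>t. g t * t)" by (intro continuous_intros gc')
    have "GG * b = fcalc (\<lambda>t. g t * t) b"
      using fcalc_mult[OF pos gc' g0 idc] fcalc_id[OF pos] by (simp add: GG_def)
    hence "GG * b * GG = fcalc (\<lambda>t. g t * t * g t) b"
      using fcalc_mult[OF pos c1 _ gc' g0] by (simp add: GG_def)
    also have "\<dots> = FB" unfolding FB_def
    proof (rule fcalc_cong[OF pos])
      show "continuous_on {0..norm b} (\<lambda>t. g t * t * g t)" by (rule continuous_on_mult[OF c1 gc'])
      show "g 0 * 0 * g 0 = 0" by (simp only: mult_zero_right mult_zero_left)
      show "\<And>t. 0 \<le> t \<Longrightarrow> t \<le> norm b \<Longrightarrow> g t * t * g t = f t" using gtg by blast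
    qed
    finally show ?thesis .
  qed
  have aG: "adj GG = GG" unfolding GG_def by (rule fcalc_adj[OF pos gc' g0])
  have aM: "adj MM = MM" unfolding MM_def by (rule fcalc_adj[OF pos mc' m0])
  have nR: "norm RR \<le> 1 / sqrt d" unfolding RR_def
    by (rule fcalc_norm[OF pos rc' r0]) (use rb in \<open>auto simp: B_def\<close>)
  have hf: "continuous_on {0..norm b} f \<and> f ` {0..norm b} \<subseteq> {0..1} \<and> f 0 = 0 \<and> f (norm b) \<noteq> 0"
    using fc' fim f0 fB by (simp add: B_def)
  have "cuntz_below a FB"
    unfolding FB_def using H hf by blast
  then obtain xs where xs: "(\<lambda>n. adj (xs n) * FB * xs n) \<longlonglongrightarrow> a" by (auto simp: cuntz_below_def)
  obtain N where N: "norm (adj (xs N) * FB * xs N - a) < \<delta>"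
    using LIMSEQ_D[OF xs del] by blast
  define x where "x = xs N"
  define z where "z = GG * x"
  have zbz: "adj z * b * z = adj x * FB * x"
    by (simp add: z_def adj_mult aG GbG[symmetric] mult.assoc)
  have nz: "norm z \<le> norm RR * norm (MM * x)"
    using norm_mult_ineq[of RR "MM * x"] by (simp add: z_def GRM mult.assoc)
  have nMx: "norm (MM * x) ^ 2 = norm (adj z * b * z)"
  proof -
    have "norm (MM * x) ^ 2 = norm (adj (MM * x) * (MM * x))" by (simp add: cstar_identity)
    also have "adj (MM * x) * (MM * x) = adj x * FB * x"
      by (simp add: adj_mult aM MMF[symmetric] mult.assoc)
    finally show ?thesis by (simp add: zbz)
  qed
  have "norm z ^ 2 \<le> (norm RR * norm (MM * x)) ^ 2"
    using nz by (intro power_mono) auto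
  also have "\<dots> = norm RR ^ 2 * norm (adj z * b * z)" by (simp add: power_mult_distrib nMx)
  also have "\<dots> \<le> (1 / sqrt d) ^ 2 * norm (adj z * b * z)"
    using nR by (intro mult_right_mono power_mono) auto
  also have "\<dots> = norm (adj z * b * z) / d" using d0 by (simp add: power_divide)
  finally have "norm z ^ 2 * d \<le> norm (adj z * b * z)" using d0 by (simp add: field_simps)
  moreover have "norm (adj z * b * z - a) < \<delta>" using N by (simp add: zbz x_def)
  ultimately show ?thesis by (auto simp: d_def B_def)
qed


theorem lemma3p2:
  fixes a b :: "'a::cstar_algebra"
  assumes "positive a" and "positive b" and "b \<noteq> 0"
    and "\<forall>f :: real \<Rightarrow> real. continuous_on {0..norm b} f \<and> f ` {0..norm b} \<subseteq> {0..1}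
           \<and> f 0 = 0 \<and> f (norm b) \<noteq> 0 \<longrightarrow> cuntz_below a (fcalc f b)"
  shows "\<exists>z :: nat \<Rightarrow> 'a. (\<lambda>n. adj (z n) * b * z n) \<longlonglongrightarrow> a
           \<and> (\<forall>n. norm (z n) = sqrt (norm a / norm b))"
proof (cases "a = 0")
  case True
  show ?thesis by (rule exI[of _ "\<lambda>n. 0"]) (simp add: True)
next
  case False
  note pos = assms(2) and H = assms(4)
  define B where "B = norm b"
  have B0: "B > 0" using assms(3) by (simp add: B_def)
  define eps where "eps n = B / (4 * real (Suc n))" for n
  have "\<exists>z. norm (adj z * b * z - a) < 1 / real (Suc n) \<and>
      norm z ^ 2 * (norm b - 2 * eps n) \<le> norm (adj z * b * z)" for n
  proof (rule key_step[OF pos H])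
    show "eps n > 0" using B0 by (simp add: eps_def)
    have "2 * eps n = B / (2 * real (Suc n))" by (simp add: eps_def field_simps)
    also have "\<dots> < B" using B0 by (simp add: field_simps add_pos_nonneg)
    finally show "2 * eps n < norm b" by (simp add: B_def)
    show "1 / real (Suc n) > 0" by simp
  qed
  then obtain zs where zs: "\<And>n. norm (adj (zs n) * b * zs n - a) < 1 / real (Suc n)"
    "\<And>n. norm (zs n) ^ 2 * (norm b - 2 * eps n) \<le> norm (adj (zs n) * b * zs n)"
    by metis
  define w where "w n = adj (zs n) * b * zs n" for n
  have wlim: "w \<longlonglongrightarrow> a"
  proof (rule LIMSEQ_I)
    fix r :: real assume r: "r > 0"
    obtain N where N: "N > 0" "inverse (real N) < r" using ex_inverse_of_nat_less[OF r] by auto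
    have "norm (w n - a) < r" if "n \<ge> N" for n
    proof -
      have "1 / real (Suc n) \<le> inverse (real N)" using that N by (simp add: field_simps)
      thus ?thesis using zs(1)[of n] N by (simp add: w_def)
    qed
    thus "\<exists>no. \<forall>n\<ge>no. norm (w n - a) < r" by blast
  qed
  have wub: "norm (w n) \<le> B * norm (zs n) ^ 2" for n
  proof -
    have "norm (w n) \<le> norm (adj (zs n) * b) * norm (zs n)" by (simp add: w_def norm_mult_ineq)
    also have "\<dots> \<le> (norm (zs n) * B) * norm (zs n)"
      using norm_mult_ineq[of "adj (zs n)" b] by (intro mult_right_mono) (auto simp: B_def)
    finally show ?thesis by (simp add: power2_eq_square algebra_simps)
  qed
  define dn where "dn n = B - 2 * eps n" for n
  have dn_eq: "dn n = B - B / (2 * real (Suc n))" for n by (simp add: dn_def eps_def field_simps)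
  have dn_pos: "dn n > 0" for n
  proof -
    have "B / (2 * real (Suc n)) < B" using B0 by (simp add: field_simps add_pos_nonneg)
    thus ?thesis by (simp add: dn_eq)
  qed
  have dn_lim: "dn \<longlonglongrightarrow> B"
  proof -
    have "(\<lambda>n. B - (B/2) * inverse (real (Suc n))) \<longlonglongrightarrow> B - (B/2) * 0"
      by (intro tendsto_intros LIMSEQ_inverse_real_of_nat)
    moreover have "(\<lambda>n. B - (B/2) * inverse (real (Suc n))) = dn"
      by (rule ext) (simp add: dn_eq field_simps)
    ultimately show ?thesis by simp
  qed
  have sq_lim: "(\<lambda>n. norm (zs n) ^ 2) \<longlonglongrightarrow> norm a / B"
  proof (rule tendsto_sandwich)
    show "eventually (\<lambda>n. norm (w n) / B \<le> norm (zs n) ^ 2) sequentially"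
      using wub B0 by (auto simp: field_simps mult.commute)
    show "eventually (\<lambda>n. norm (zs n) ^ 2 \<le> norm (w n) / dn n) sequentially"
      using zs(2) dn_pos by (auto simp: w_def dn_def B_def field_simps)
    show "(\<lambda>n. norm (w n) / B) \<longlonglongrightarrow> norm a / B"
      using B0 by (intro tendsto_intros wlim) auto
    show "(\<lambda>n. norm (w n) / dn n) \<longlonglongrightarrow> norm a / B"
      using B0 by (intro tendsto_intros wlim dn_lim) auto
  qed
  define s where "s = sqrt (norm a / B)"
  have s0: "s > 0" using False B0 by (simp add: s_def)
  have nlim: "(\<lambda>n. norm (zs n)) \<longlonglongrightarrow> s"
  proof -
    have "(\<lambda>n. sqrt (norm (zs n) ^ 2)) \<longlonglongrightarrow> s" unfolding s_def by (intro tendsto_intros sq_lim)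
    thus ?thesis by simp
  qed
  have ev: "eventually (\<lambda>n. zs n \<noteq> 0) sequentially"
  proof -
    have "eventually (\<lambda>n. 0 < norm (zs n)) sequentially" using order_tendstoD(1)[OF nlim s0] .
    thus ?thesis by (rule eventually_mono) auto
  qed
  define Z where "Z n = (if zs n = 0 then (s / B) *\<^sub>R b else (s / norm (zs n)) *\<^sub>R zs n)" for n
  have nZ: "norm (Z n) = s" for n
    using s0 B0 by (simp add: Z_def B_def)
  have eqZ: "eventually (\<lambda>n. (s / norm (zs n)) ^ 2 *\<^sub>R w n = adj (Z n) * b * Z n) sequentially"
    using ev
  proof (rule eventually_mono)
    fix n assume "zs n \<noteq> 0"
    thus "(s / norm (zs n)) ^ 2 *\<^sub>R w n = adj (Z n) * b * Z n"
      by (simp add: Z_def w_def adj_scaleR power2_eq_square)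
  qed
  have "(\<lambda>n. (s / norm (zs n)) ^ 2 *\<^sub>R w n) \<longlonglongrightarrow> (s / s) ^ 2 *\<^sub>R a"
    by (intro tendsto_intros nlim wlim) (use s0 in auto)
  hence "(\<lambda>n. adj (Z n) * b * Z n) \<longlonglongrightarrow> a"
    using s0 Lim_transform_eventually[OF _ eqZ] by simp
  moreover have "\<forall>n. norm (Z n) = sqrt (norm a / norm b)" using nZ by (simp add: s_def B_def)
  ultimately show ?thesis by blast
qed


end
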